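(* Assume Assumption A. Let $\{\mathscr F_1,\dots,\mathscr F_{\mathfrak p},\Delta_{\mathscr F}\}$, $\mathfrak p\ge2$, be a partition of $E$ and $\beta^-_N,\beta_N$ positive sequences with $\beta^-_N/\beta_N\to0$ satisfying (H0)–(H3) with $(a_N,b_N)=(\beta^-_N,\beta_N)$; let $X_{\mathscr F}$ be the Markov chain on $P=\{1,\dots,\mathfrak p\}$ with rates $r_{\mathscr F}(x,y)$ given by (H1). Let $C$ be a communicating class of $X_{\mathscr F}$ and $\mathscr C=\bigcup_{x\in C}\mathscr F_x$. Then for all $\eta\ne\xi\in\mathscr C$ there exists $m(\eta,\xi)\in(0,\infty)$ with $\lim_{N\to\infty}\mu_N(\eta)/\mu_N(\xi)=m(\eta,\xi)$.
   Context: Setting: $E$ is a fixed finite set. For each $N\ge1$, $(\eta^N_t)$ is a continuous-time irreducible Markov chain on $E$ with jump rates $R_N(\eta,\xi)$, holding rates $\lambda_N(\eta)=\sum_{\xi\neq\eta}R_N(\eta,\xi)$ and unique invariant probability $\mu_N$; $\mathbb P_\eta,\mathbb E_\eta$ law/expectation from $\eta$. $H_A=\inf\{t>0:\eta^N_t\in A\}$, $H^+_A=\inf\{t>\tau_1:\eta^N_t\in A\}$, $\tau_1$ first jump time; $\mathrm{Cap}_N(A,B)=\sum_{\eta\in A}\mu_N(\eta)\lambda_N(\eta)\mathbb P_\eta[H_B<H^+_A]$, $\mathrm{Cap}_N(\eta,\xi)=\mathrm{Cap}_N(\{\eta\},\{\xi\})$. The trace on nonempty $F\subset E$ is $\eta^F_t=\eta^N_{S_F(t)}$,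 $S_F(t)=\sup\{s:\int_0^s\mathbf 1\{\eta^N_r\in F\}dr\le t\}$, with jump rates $R^F_N$. Ordered families: a finite family of sequences of positive reals $(a^r_N)$, $r\in\mathfrak R$, is ordered if for all $r\neq s$, $\arctan(a^r_N/a^s_N)$ converges. Assumption A: (i) for each $\eta\neq\xi$, either $R_N(\eta,\xi)=0$ for all $N$ or $>0$ for all $N$; $\mathbb B$ is the set of pairs with positive rates; (ii) for every $m\ge1$ the family $\prod_{(\eta,\xi)\in\mathbb B}R_N(\eta,\xi)^{k(\eta,\xi)}$, $k:\mathbb B\to\mathbb Z_+$, $\sum k=m$, is ordered. Conditions for a partition $\{\mathscr F_1,\dots,\mathscr F_{\mathfrak p},\Delta_{\mathscr F}\}$ (independent of $N$) and $(a_N,b_N)$, with $\mathscr F=\bigcup_x\mathscr F_x$ and $r^{\mathscr F}_N(\mathscr F_x,\mathscr F_y)=\mu_N(\mathscr F_x)^{-1}\sum_{\eta\in\mathscr F_x}\mu_N(\eta)\sum_{\xi\in\mathscr F_y}R^{\mathscr F}_N(\eta,\xi)$: (H0) for each $x$, $\eta\in\mathscr F_x$, $\lim_N\mu_N(\eta)/\mu_N(\mathscr F_x)\in(0,1]$ exists; (H1) for $x\ne y$, $r_{\mathscr F}(x,y):=\lim_Nb_Nr^{\mathscr F}_N(\mathscr F_x,\mathscr F_y)\in[0,\infty)$ exists, and $\sum_x\sum_{y\ne x}r_{\mathscr F}(x,y)>0$; (H2) for $|\mathscr F_x|\ge2$, $\eta\ne\xi\in\mathscr F_x$: $\liminf_Na_N\mathrm{Cap}_N(\eta,\xi)/\mu_N(\mathscr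 F_x)>0$; (H3) for every $t>0$, $\lim_N\max_\eta\mathbb E_\eta[\int_0^t\mathbf 1\{\eta^N_{sb_N}\in\Delta_{\mathscr F}\}ds]=0$. *)

theory Defs
  imports "HOL-Analysis.Analysis"
begin

text \<open>State space E is a finite type 'a. A model is a sequence of rate functions
  R N eta xi (diagonal entries ignored) and invariant probabilities mu N.\<close>

definition holding_rate :: "(nat \<Rightarrow> 'a::finite \<Rightarrow> 'a \<Rightarrow> real) \<Rightarrow> nat \<Rightarrow> 'a \<Rightarrow> real" where
  "holding_rate R N eta = (\<Sum>xi\<in>UNIV - {eta}. R N eta xi)"

definition jump_prob :: "(nat \<Rightarrow> 'a::finite \<Rightarrow> 'a \<Rightarrow> real) \<Rightarrow> nat \<Rightarrow> 'a \<Rightarrow> 'a \<Rightarrow> real" where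
  "jump_prob R N eta xi = (if xi = eta then 0 else R N eta xi / holding_rate R N eta)"

text \<open>first_entr p F n z x: probability, for the discrete chain with transition matrix p
  started at z, that the first visit to F (time 0 included) happens at step n at the state x.\<close>
fun first_entr :: "('a::finite \<Rightarrow> 'a \<Rightarrow> real) \<Rightarrow> 'a set \<Rightarrow> nat \<Rightarrow> 'a \<Rightarrow> 'a \<Rightarrow> real" where
  "first_entr p F 0 z x = (if z \<in> F \<and> z = x then 1 else 0)"
| "first_entr p F (Suc n) z x = (if z \<in> F then 0 else (\<Sum>y\<in>UNIV. p z y * first_entr p F n y x))"

text \<open>hit_at R N F z x = P_z[H_F < infinity, eta(H_F) = x] (hitting time H_F of the
  continuous-time chain started at z; the jump chain visits the same states in the same order).\<close>
definition hit_at :: "(nat \<Rightarrow> 'a::finite \<Rightarrow> 'a \<Rightarrow> real) \<Rightarrow> nat \<Rightarrow> 'a set \<Rightarrow> 'a \<Rightarrow> 'a \<Rightarrow> real" where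
  "hit_at R N F z x = (\<Sum>n. first_entr (jump_prob R N) F n z x)"

text \<open>escape_prob R N A B eta = P_eta[H_B < H^+_A] (A, B disjoint).\<close>
definition escape_prob :: "(nat \<Rightarrow> 'a::finite \<Rightarrow> 'a \<Rightarrow> real) \<Rightarrow> nat \<Rightarrow> 'a set \<Rightarrow> 'a set \<Rightarrow> 'a \<Rightarrow> real" where
  "escape_prob R N A B eta = (\<Sum>y\<in>UNIV. jump_prob R N eta y * (\<Sum>x\<in>B. hit_at R N (A \<union> B) y x))"

definition Cap :: "(nat \<Rightarrow> 'a::finite \<Rightarrow> 'a \<Rightarrow> real) \<Rightarrow> (nat \<Rightarrow> 'a \<Rightarrow> real) \<Rightarrow> nat \<Rightarrow> 'a set \<Rightarrow> 'a set \<Rightarrow> real" where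
  "Cap R mu N A B = (\<Sum>eta\<in>A. mu N eta * holding_rate R N eta * escape_prob R N A B eta)"

text \<open>Jump rates of the trace process on F: for eta \<noteq> xi in F,
  R^F_N(eta,xi) = lambda_N(eta) P_eta[H^+_F = H_xi].\<close>
definition trace_rate :: "(nat \<Rightarrow> 'a::finite \<Rightarrow> 'a \<Rightarrow> real) \<Rightarrow> nat \<Rightarrow> 'a set \<Rightarrow> 'a \<Rightarrow> 'a \<Rightarrow> real" where
  "trace_rate R N F eta xi =
     (if eta = xi then 0 else holding_rate R N eta * (\<Sum>y\<in>UNIV. jump_prob R N eta y * hit_at R N F y xi))"

definition mean_rate :: "(nat \<Rightarrow> 'a::finite \<Rightarrow> 'a \<Rightarrow> real) \<Rightarrow> (nat \<Rightarrow> 'a \<Rightarrow> real) \<Rightarrow> nat \<Rightarrow> 'a set \<Rightarrow> 'a set \<Rightarrow> 'a set \<Rightarrow> real" where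
  "mean_rate R mu N F X Y =
     (\<Sum>eta\<in>X. mu N eta * (\<Sum>xi\<in>Y. trace_rate R N F eta xi)) / (\<Sum>eta\<in>X. mu N eta)"

definition generator :: "(nat \<Rightarrow> 'a::finite \<Rightarrow> 'a \<Rightarrow> real) \<Rightarrow> nat \<Rightarrow> 'a \<Rightarrow> 'a \<Rightarrow> real" where
  "generator R N eta xi = (if eta = xi then - holding_rate R N eta else R N eta xi)"

fun generator_pow :: "(nat \<Rightarrow> 'a::finite \<Rightarrow> 'a \<Rightarrow> real) \<Rightarrow> nat \<Rightarrow> nat \<Rightarrow> 'a \<Rightarrow> 'a \<Rightarrow> real" where
  "generator_pow R N 0 eta xi = (if eta = xi then 1 else 0)"
| "generator_pow R N (Suc k) eta xi = (\<Sum>y\<in>UNIV. generator R N eta y * generator_pow R N k y xi)"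

definition trans_prob :: "(nat \<Rightarrow> 'a::finite \<Rightarrow> 'a \<Rightarrow> real) \<Rightarrow> nat \<Rightarrow> real \<Rightarrow> 'a \<Rightarrow> 'a \<Rightarrow> real" where
  "trans_prob R N t eta xi = (\<Sum>k. t ^ k / fact k * generator_pow R N k eta xi)"

text \<open>occupation R N D b t eta = E_eta[ integral_0^t 1{eta^N(s b) \<in> D} ds ].\<close>
definition occupation :: "(nat \<Rightarrow> 'a::finite \<Rightarrow> 'a \<Rightarrow> real) \<Rightarrow> nat \<Rightarrow> 'a set \<Rightarrow> real \<Rightarrow> real \<Rightarrow> 'a \<Rightarrow> real" where
  "occupation R N D b t eta = integral {0..t} (\<lambda>s. \<Sum>xi\<in>D. trans_prob R N (s * b) eta xi)"

definition irreducible_rates :: "(nat \<Rightarrow> 'a::finite \<Rightarrow> 'a \<Rightarrow> real) \<Rightarrow> bool" where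
  "irreducible_rates R \<longleftrightarrow>
     (\<forall>N eta xi. eta \<noteq> xi \<longrightarrow> R N eta xi \<ge> 0) \<and>
     (\<forall>N eta xi. (eta, xi) \<in> {(a, b). a \<noteq> b \<and> R N a b > 0}\<^sup>*)"

definition invariant_prob :: "(nat \<Rightarrow> 'a::finite \<Rightarrow> 'a \<Rightarrow> real) \<Rightarrow> (nat \<Rightarrow> 'a \<Rightarrow> real) \<Rightarrow> bool" where
  "invariant_prob R mu \<longleftrightarrow>
     (\<forall>N eta. mu N eta \<ge> 0) \<and> (\<forall>N. (\<Sum>eta\<in>UNIV. mu N eta) = 1) \<and>
     (\<forall>N xi. (\<Sum>eta\<in>UNIV - {xi}. mu N eta * R N eta xi) = mu N xi * holding_rate R N xi)"

definition ordered_family :: "'r set \<Rightarrow> ('r \<Rightarrow> nat \<Rightarrow> real) \<Rightarrow> bool" where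
  "ordered_family I a \<longleftrightarrow> (\<forall>r\<in>I. \<forall>s\<in>I. r \<noteq> s \<longrightarrow> convergent (\<lambda>N. arctan (a r N / a s N)))"

definition pos_pairs :: "(nat \<Rightarrow> 'a \<Rightarrow> 'a \<Rightarrow> real) \<Rightarrow> ('a \<times> 'a) set" where
  "pos_pairs R = {(eta, xi). eta \<noteq> xi \<and> (\<forall>N. R N eta xi > 0)}"

definition assumption_A :: "(nat \<Rightarrow> 'a::finite \<Rightarrow> 'a \<Rightarrow> real) \<Rightarrow> bool" where
  "assumption_A R \<longleftrightarrow>
     (\<forall>eta xi. eta \<noteq> xi \<longrightarrow> (\<forall>N. R N eta xi = 0) \<or> (\<forall>N. R N eta xi > 0)) \<and>
     (\<forall>m::nat. m \<ge> 1 \<longrightarrow>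
        ordered_family
          {k :: 'a \<times> 'a \<Rightarrow> nat. (\<forall>e. e \<notin> pos_pairs R \<longrightarrow> k e = 0) \<and> (\<Sum>e\<in>pos_pairs R. k e) = m}
          (\<lambda>k N. \<Prod>e\<in>pos_pairs R. R N (fst e) (snd e) ^ k e))"

definition is_partition :: "nat \<Rightarrow> (nat \<Rightarrow> 'a set) \<Rightarrow> 'a set \<Rightarrow> bool" where
  "is_partition p F D \<longleftrightarrow>
     (\<forall>x\<in>{1..p}. F x \<noteq> {}) \<and>
     (\<forall>x\<in>{1..p}. \<forall>y\<in>{1..p}. x \<noteq> y \<longrightarrow> F x \<inter> F y = {}) \<and>
     (\<forall>x\<in>{1..p}. F x \<inter> D = {}) \<and>
     (\<Union>x\<in>{1..p}. F x) \<union> D = UNIV"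

definition muS :: "(nat \<Rightarrow> 'a \<Rightarrow> real) \<Rightarrow> nat \<Rightarrow> 'a set \<Rightarrow> real" where
  "muS mu N A = (\<Sum>eta\<in>A. mu N eta)"

definition Fset :: "nat \<Rightarrow> (nat \<Rightarrow> 'a set) \<Rightarrow> 'a set" where
  "Fset p F = (\<Union>x\<in>{1..p}. F x)"

definition rF :: "(nat \<Rightarrow> 'a::finite \<Rightarrow> 'a \<Rightarrow> real) \<Rightarrow> (nat \<Rightarrow> 'a \<Rightarrow> real) \<Rightarrow> nat \<Rightarrow> (nat \<Rightarrow> 'a set)
                  \<Rightarrow> (nat \<Rightarrow> real) \<Rightarrow> nat \<Rightarrow> nat \<Rightarrow> real" where
  "rF R mu p F b x y = lim (\<lambda>N. b N * mean_rate R mu N (Fset p F) (F x) (F y))"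

definition H0 :: "(nat \<Rightarrow> 'a::finite \<Rightarrow> real) \<Rightarrow> nat \<Rightarrow> (nat \<Rightarrow> 'a set) \<Rightarrow> bool" where
  "H0 mu p F \<longleftrightarrow> (\<forall>x\<in>{1..p}. \<forall>eta\<in>F x. \<exists>c. 0 < c \<and> c \<le> 1 \<and>
      (\<lambda>N. mu N eta / muS mu N (F x)) \<longlonglongrightarrow> c)"

definition H1 :: "(nat \<Rightarrow> 'a::finite \<Rightarrow> 'a \<Rightarrow> real) \<Rightarrow> (nat \<Rightarrow> 'a \<Rightarrow> real) \<Rightarrow> nat \<Rightarrow> (nat \<Rightarrow> 'a set)
                  \<Rightarrow> (nat \<Rightarrow> real) \<Rightarrow> bool" where
  "H1 R mu p F b \<longleftrightarrow>
     (\<forall>x\<in>{1..p}. \<forall>y\<in>{1..p}. x \<noteq> y \<longrightarrow>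
        (\<exists>r. 0 \<le> r \<and> (\<lambda>N. b N * mean_rate R mu N (Fset p F) (F x) (F y)) \<longlonglongrightarrow> r)) \<and>
     (\<Sum>x\<in>{1..p}. \<Sum>y\<in>{1..p} - {x}. rF R mu p F b x y) > 0"

definition H2 :: "(nat \<Rightarrow> 'a::finite \<Rightarrow> 'a \<Rightarrow> real) \<Rightarrow> (nat \<Rightarrow> 'a \<Rightarrow> real) \<Rightarrow> nat \<Rightarrow> (nat \<Rightarrow> 'a set)
                  \<Rightarrow> (nat \<Rightarrow> real) \<Rightarrow> bool" where
  "H2 R mu p F a \<longleftrightarrow>
     (\<forall>x\<in>{1..p}. card (F x) \<ge> 2 \<longrightarrow> (\<forall>eta\<in>F x. \<forall>xi\<in>F x. eta \<noteq> xi \<longrightarrow>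
        liminf (\<lambda>N. ereal (a N * Cap R mu N {eta} {xi} / muS mu N (F x))) > 0))"

definition H3 :: "(nat \<Rightarrow> 'a::finite \<Rightarrow> 'a \<Rightarrow> real) \<Rightarrow> 'a set \<Rightarrow> (nat \<Rightarrow> real) \<Rightarrow> bool" where
  "H3 R D b \<longleftrightarrow>
     (\<forall>t::real. t > 0 \<longrightarrow> (\<lambda>N. Max (range (\<lambda>eta. occupation R N D (b N) t eta))) \<longlonglongrightarrow> 0)"

definition comm_class :: "nat \<Rightarrow> (nat \<Rightarrow> nat \<Rightarrow> real) \<Rightarrow> nat set \<Rightarrow> bool" where
  "comm_class p r C \<longleftrightarrow>
     (let reach = {(x, y). x \<in> {1..p} \<and> y \<in> {1..p} \<and> x \<noteq> y \<and> r x y > 0}\<^sup>* in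
       (\<exists>x\<in>{1..p}. C = {y\<in>{1..p}. (x, y) \<in> reach \<and> (y, x) \<in> reach}))"

end

theory Submission
  imports Defs
begin


definition degs :: "(nat \<Rightarrow> 'a \<Rightarrow> 'a \<Rightarrow> real) \<Rightarrow> nat \<Rightarrow> ('a \<times> 'a \<Rightarrow> nat) set" where
  "degs R m = {k. (\<forall>e. e \<notin> pos_pairs R \<longrightarrow> k e = 0) \<and> (\<Sum>e\<in>pos_pairs R. k e) = m}"

definition mnm :: "(nat \<Rightarrow> 'a \<Rightarrow> 'a \<Rightarrow> real) \<Rightarrow> ('a \<times> 'a \<Rightarrow> nat) \<Rightarrow> nat \<Rightarrow> real" where
  "mnm R k N = (\<Prod>e\<in>pos_pairs R. R N (fst e) (snd e) ^ k e)"

definition Spos :: "(nat \<Rightarrow> 'a \<Rightarrow> 'a \<Rightarrow> real) \<Rightarrow> nat \<Rightarrow> (nat \<Rightarrow> real) \<Rightarrow> bool" where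
  "Spos R m f \<longleftrightarrow> (\<exists>xs. xs \<noteq> [] \<and> (\<forall>ck\<in>set xs. fst ck > 0 \<and> snd ck \<in> degs R m) \<and>
      (\<forall>N. f N = (\<Sum>ck\<leftarrow>xs. fst ck * mnm R (snd ck) N)))"

definition Sz :: "(nat \<Rightarrow> 'a \<Rightarrow> 'a \<Rightarrow> real) \<Rightarrow> nat \<Rightarrow> (nat \<Rightarrow> real) \<Rightarrow> bool" where
  "Sz R m f \<longleftrightarrow> Spos R m f \<or> (\<forall>N. f N = 0)"

lemma finite_pp: "finite (pos_pairs (R :: nat \<Rightarrow> 'a::finite \<Rightarrow> 'a \<Rightarrow> real))"
  by simp

lemma mnm_pos: "mnm R k N > 0"
  unfolding mnm_def
  by (rule prod_pos) (auto simp: pos_pairs_def)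

lemma mnm_add: "mnm R (\<lambda>e. k e + l e) N = mnm R k N * mnm R l N"
  unfolding mnm_def by (simp add: power_add prod.distrib)

lemma mnm_zero: "mnm R (\<lambda>e. 0) N = 1"
  unfolding mnm_def by simp

lemma sum_list_pos_aux:
  fixes g :: "'b \<Rightarrow> real"
  shows "xs \<noteq> [] \<Longrightarrow> (\<forall>x\<in>set xs. 0 < g x) \<Longrightarrow> 0 < (\<Sum>x\<leftarrow>xs. g x)"
proof (induction xs)
  case Nil then show ?case by simp
next
  case (Cons a xs)
  then show ?case
    by (cases "xs = []") (auto intro!: add_pos_pos)
qed

lemma sum_list_nonneg_aux:
  fixes g :: "'b \<Rightarrow> real"
  shows "(\<forall>x\<in>set xs. 0 \<le> g x) \<Longrightarrow> 0 \<le> (\<Sum>x\<leftarrow>xs. g x)"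
  by (induction xs) auto

lemma sum_list_ge_member:
  fixes g :: "'b \<Rightarrow> real"
  shows "y \<in> set xs \<Longrightarrow> (\<forall>x\<in>set xs. 0 \<le> g x) \<Longrightarrow> g y \<le> (\<Sum>x\<leftarrow>xs. g x)"
proof (induction xs)
  case Nil then show ?case by simp
next
  case (Cons a xs)
  show ?case
  proof (cases "y = a")
    case True
    then show ?thesis using Cons.prems sum_list_nonneg_aux[of xs g] by auto
  next
    case False
    then show ?thesis using Cons by auto
  qed
qed

lemma Spos_pos: "Spos R m f \<Longrightarrow> f N > 0"
proof -
  assume "Spos R m f"
  then obtain xs where xs: "xs \<noteq> []" "\<forall>ck\<in>set xs. fst ck > 0 \<and> snd ck \<in> degs R m"
    "\<forall>N. f N = (\<Sum>ck\<leftarrow>xs. fst ck * mnm R (snd ck) N)" unfolding Spos_def by blast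
  have "0 < (\<Sum>ck\<leftarrow>xs. fst ck * mnm R (snd ck) N)"
    using xs(1,2) by (intro sum_list_pos_aux) (auto intro!: mult_pos_pos mnm_pos)
  then show ?thesis using xs(3) by simp
qed

lemma Spos_add: "Spos R m f \<Longrightarrow> Spos R m g \<Longrightarrow> Spos R m (\<lambda>N. f N + g N)"
  unfolding Spos_def
  apply (elim exE conjE)
  subgoal for xs ys
    by (rule exI[of _ "xs @ ys"]) auto
  done

definition lmul :: "(real \<times> ('b \<Rightarrow> nat)) list \<Rightarrow> (real \<times> ('b \<Rightarrow> nat)) list \<Rightarrow> (real \<times> ('b \<Rightarrow> nat)) list" where
  "lmul xs ys = concat (map (\<lambda>ck. map (\<lambda>dl. (fst ck * fst dl, \<lambda>e. snd ck e + snd dl e)) ys) xs)"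

lemma lmul_sum:
  "(\<Sum>ck\<leftarrow>lmul xs ys. fst ck * mnm R (snd ck) N) =
   (\<Sum>ck\<leftarrow>xs. fst ck * mnm R (snd ck) N) * (\<Sum>ck\<leftarrow>ys. fst ck * mnm R (snd ck) N)"
proof (induction xs)
  case Nil then show ?case by (simp add: lmul_def)
next
  case (Cons a xs)
  have "(\<Sum>ck\<leftarrow>lmul (a # xs) ys. fst ck * mnm R (snd ck) N) =
     (\<Sum>dl\<leftarrow>ys. fst a * fst dl * mnm R (\<lambda>e. snd a e + snd dl e) N) +
     (\<Sum>ck\<leftarrow>lmul xs ys. fst ck * mnm R (snd ck) N)"
    by (simp add: lmul_def o_def)
  also have "(\<Sum>dl\<leftarrow>ys. fst a * fst dl * mnm R (\<lambda>e. snd a e + snd dl e) N) =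
      (fst a * mnm R (snd a) N) * (\<Sum>dl\<leftarrow>ys. fst dl * mnm R (snd dl) N)"
    by (induction ys) (simp_all add: mnm_add algebra_simps)
  finally show ?case using Cons by (simp add: algebra_simps)
qed

lemma degs_add: "k \<in> degs R m \<Longrightarrow> l \<in> degs R n \<Longrightarrow> (\<lambda>e. k e + l e) \<in> degs R (m + n)"
  unfolding degs_def by (simp add: sum.distrib)

lemma lmul_set: "ckl \<in> set (lmul xs ys) \<Longrightarrow> \<exists>ck\<in>set xs. \<exists>dl\<in>set ys. ckl = (fst ck * fst dl, \<lambda>e. snd ck e + snd dl e)"
  unfolding lmul_def by auto

lemma Spos_mult: "Spos R m f \<Longrightarrow> Spos R n g \<Longrightarrow> Spos R (m + n) (\<lambda>N. f N * g N)"
proof -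
  assume "Spos R m f" "Spos R n g"
  then obtain xs ys where xs: "xs \<noteq> []" "\<forall>ck\<in>set xs. fst ck > 0 \<and> snd ck \<in> degs R m"
    "\<forall>N. f N = (\<Sum>ck\<leftarrow>xs. fst ck * mnm R (snd ck) N)"
    and ys: "ys \<noteq> []" "\<forall>ck\<in>set ys. fst ck > 0 \<and> snd ck \<in> degs R n"
    "\<forall>N. g N = (\<Sum>ck\<leftarrow>ys. fst ck * mnm R (snd ck) N)" unfolding Spos_def by blast
  have "lmul xs ys \<noteq> []" using xs(1) ys(1) by (cases xs; cases ys) (simp_all add: lmul_def)
  moreover have "\<forall>ckl\<in>set (lmul xs ys). fst ckl > 0 \<and> snd ckl \<in> degs R (m + n)"
  proof
    fix ckl assume "ckl \<in> set (lmul xs ys)"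
    then obtain ck dl where "ck \<in> set xs" "dl \<in> set ys" "ckl = (fst ck * fst dl, \<lambda>e. snd ck e + snd dl e)"
      using lmul_set by blast
    moreover have "snd ck \<in> degs R m" "snd dl \<in> degs R n" "fst ck > 0" "fst dl > 0"
      using xs(2) ys(2) \<open>ck \<in> set xs\<close> \<open>dl \<in> set ys\<close> by auto
    ultimately show "fst ckl > 0 \<and> snd ckl \<in> degs R (m + n)"
      using degs_add[of "snd ck" R m "snd dl" n] by (simp add: mult_pos_pos)
  qed
  moreover have "\<forall>N. f N * g N = (\<Sum>ck\<leftarrow>lmul xs ys. fst ck * mnm R (snd ck) N)"
    using xs(3) ys(3) by (simp add: lmul_sum)
  ultimately show ?thesis unfolding Spos_def by blast
qed

lemma Spos_one: "Spos R 0 (\<lambda>N. 1)"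
  unfolding Spos_def
  by (rule exI[of _ "[(1, \<lambda>e. 0)]"]) (simp add: degs_def mnm_zero)

lemma Spos_rate:
  assumes "(a, b) \<in> pos_pairs (R :: nat \<Rightarrow> 'a::finite \<Rightarrow> 'a \<Rightarrow> real)"
  shows "Spos R 1 (\<lambda>N. R N a b)"
proof -
  define k where "k = (\<lambda>e. if e = (a, b) then 1 else (0::nat))"
  have "k \<in> degs R 1" using assms by (simp add: degs_def k_def)
  moreover have "mnm R k N = R N a b" for N
  proof -
    have "mnm R k N = R N a b ^ k (a,b) * (\<Prod>e\<in>pos_pairs R - {(a,b)}. R N (fst e) (snd e) ^ k e)"
      unfolding mnm_def using assms finite_pp by (simp add: prod.remove)
    also have "(\<Prod>e\<in>pos_pairs R - {(a,b)}. R N (fst e) (snd e) ^ k e) = 1"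
      by (rule prod.neutral) (simp add: k_def)
    finally show ?thesis by (simp add: k_def)
  qed
  ultimately show ?thesis unfolding Spos_def
    by (intro exI[of _ "[(1, k)]"]) simp
qed

lemma Spos_cong: "Spos R m f \<Longrightarrow> (\<And>N. g N = f N) \<Longrightarrow> Spos R m g"
proof -
  assume a: "Spos R m f" "\<And>N. g N = f N"
  then have "g = f" by (intro ext) simp
  then show ?thesis using a(1) by simp
qed

lemma Sz_zero: "Sz R m f \<Longrightarrow> \<not> Spos R m f \<Longrightarrow> f N = 0"
  unfolding Sz_def by blast

lemma Spos_Sz: "Spos R m f \<Longrightarrow> Sz R m f"
  unfolding Sz_def by blast

lemma Sz_zeroI: "(\<And>N. f N = 0) \<Longrightarrow> Sz R m f"
  unfolding Sz_def by blast

lemma Spos_add_Sz: assumes "Spos R m f" "Sz R m g" shows "Spos R m (\<lambda>N. f N + g N)"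
proof (cases "Spos R m g")
  case True then show ?thesis using Spos_add[OF assms(1) True] by blast
next
  case False
  then have "g N = 0" for N using Sz_zero[OF assms(2)] by blast
  then show ?thesis using Spos_cong[OF assms(1), of "\<lambda>N. f N + g N"] by simp
qed

lemma Sz_add_Spos: assumes "Sz R m f" "Spos R m g" shows "Spos R m (\<lambda>N. f N + g N)"
proof -
  have "Spos R m (\<lambda>N. g N + f N)" using Spos_add_Sz[OF assms(2) assms(1)] .
  then show ?thesis by (rule Spos_cong) simp
qed

lemma Sz_add: assumes "Sz R m f" "Sz R m g" shows "Sz R m (\<lambda>N. f N + g N)"
proof (cases "Spos R m f")
  case True then show ?thesis using Spos_add_Sz[OF True assms(2)] Spos_Sz by blast
next
  case False
  then have f0: "f N = 0" for N using Sz_zero[OF assms(1)] by blast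
  show ?thesis
  proof (cases "Spos R m g")
    case True then show ?thesis using Sz_add_Spos[OF assms(1) True] Spos_Sz by blast
  next
    case False
    then have "g N = 0" for N using Sz_zero[OF assms(2)] by blast
    then show ?thesis using f0 by (intro Sz_zeroI) simp
  qed
qed

lemma Sz_mult: assumes "Sz R m f" "Sz R n g" shows "Sz R (m + n) (\<lambda>N. f N * g N)"
proof (cases "Spos R m f \<and> Spos R n g")
  case True then show ?thesis using Spos_mult[of R m f n g] Spos_Sz by blast
next
  case False
  then have "(\<forall>N. f N = 0) \<or> (\<forall>N. g N = 0)" using Sz_zero[OF assms(1)] Sz_zero[OF assms(2)] by blast
  then show ?thesis by (intro Sz_zeroI) auto
qed

lemma Sz_sum:
  assumes "finite A" "\<forall>a\<in>A. Sz R m (h a)"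
  shows "Sz R m (\<lambda>N. \<Sum>a\<in>A. h a N) \<and> ((\<exists>a\<in>A. Spos R m (h a)) \<longrightarrow> Spos R m (\<lambda>N. \<Sum>a\<in>A. h a N))"
  using assms
proof (induction A rule: finite_induct)
  case empty then show ?case by (simp add: Sz_def)
next
  case (insert x F)
  then have hx: "Sz R m (h x)" and IH: "Sz R m (\<lambda>N. \<Sum>a\<in>F. h a N)"
      "(\<exists>a\<in>F. Spos R m (h a)) \<longrightarrow> Spos R m (\<lambda>N. \<Sum>a\<in>F. h a N)" by auto
  have eq: "(\<lambda>N. \<Sum>a\<in>insert x F. h a N) = (\<lambda>N. h x N + (\<Sum>a\<in>F. h a N))"
    using insert by simp
  have 1: "Sz R m (\<lambda>N. h x N + (\<Sum>a\<in>F. h a N))" using Sz_add[OF hx IH(1)] .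
  have 2: "Spos R m (\<lambda>N. h x N + (\<Sum>a\<in>F. h a N))" if "\<exists>a\<in>insert x F. Spos R m (h a)"
  proof (cases "Spos R m (h x)")
    case True then show ?thesis using Spos_add_Sz[OF _ IH(1)] by blast
  next
    case False
    then have "\<exists>a\<in>F. Spos R m (h a)" using that by blast
    then show ?thesis using Sz_add_Spos[OF hx] IH(2) by blast
  qed
  show ?case unfolding eq using 1 2 by blast
qed



lemma arctan_conv_cases:
  fixes x :: "nat \<Rightarrow> real"
  assumes pos: "\<forall>N. x N > 0" and conv: "convergent (\<lambda>N. arctan (x N))"
  shows "(\<exists>L\<ge>0. x \<longlonglongrightarrow> L) \<or> filterlim x at_top sequentially"
proof -
  obtain a where a: "(\<lambda>N. arctan (x N)) \<longlonglongrightarrow> a" using conv convergent_def by blast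
  have ale: "a \<le> pi/2"
    by (rule tendsto_upperbound[OF a]) (intro always_eventually allI less_imp_le arctan_ubound, simp)
  have "\<forall>N. 0 \<le> arctan (x N)" using pos by (simp add: less_imp_le)
  then have age: "0 \<le> a"
    by (intro tendsto_lowerbound[OF a]) (rule always_eventually, assumption, simp)
  show ?thesis
  proof (cases "a < pi/2")
    case True
    have "cos a > 0" using True age by (intro cos_gt_zero_pi) auto
    then have "isCont tan a" by (intro isCont_tan) simp
    then have "(\<lambda>N. tan (arctan (x N))) \<longlonglongrightarrow> tan a"
      using a by (rule isCont_tendsto_compose)
    then have lim: "x \<longlonglongrightarrow> tan a" by (simp add: tan_arctan)
    have "\<forall>N. 0 \<le> x N" using pos by (simp add: less_imp_le)
    then have "0 \<le> tan a"
      by (intro tendsto_lowerbound[OF lim]) (rule always_eventually, assumption, simp)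
    then show ?thesis using lim by blast
  next
    case False
    then have api: "a = pi/2" using ale by simp
    have "filterlim x at_top sequentially"
      unfolding filterlim_at_top
    proof
      fix Z :: real
      have "arctan Z < a" using api arctan_ubound[of Z] by linarith
      then have "eventually (\<lambda>N. arctan Z < arctan (x N)) sequentially"
        using order_tendstoD(1)[OF a] by blast
      then show "eventually (\<lambda>N. Z \<le> x N) sequentially"
        by eventually_elim (simp add: arctan_less_iff less_imp_le)
    qed
    then show ?thesis by blast
  qed
qed

lemma degs_zero: "k \<in> degs (R :: nat \<Rightarrow> 'a::finite \<Rightarrow> 'a \<Rightarrow> real) 0 \<Longrightarrow> k = (\<lambda>e. 0)"
proof
  fix e assume k: "k \<in> degs R 0"
  show "k e = 0"
  proof (cases "e \<in> pos_pairs R")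
    case True
    have "(\<Sum>e\<in>pos_pairs R. k e) = 0" using k by (simp add: degs_def)
    then show ?thesis using True finite_pp[of R] by simp
  next
    case False then show ?thesis using k unfolding degs_def by blast
  qed
qed

lemma mnm_nz: "mnm R k N \<noteq> 0"
  using mnm_pos[of R k N] by linarith

lemma degs_ratio:
  assumes A: "assumption_A (R :: nat \<Rightarrow> 'a::finite \<Rightarrow> 'a \<Rightarrow> real)"
    and j: "j \<in> degs R m" and k: "k \<in> degs R m"
  shows "(\<exists>L\<ge>0. (\<lambda>N. mnm R j N / mnm R k N) \<longlonglongrightarrow> L) \<or>
         filterlim (\<lambda>N. mnm R j N / mnm R k N) at_top sequentially"
proof (cases "j = k")
  case True
  have "(\<lambda>N. mnm R j N / mnm R k N) = (\<lambda>N. 1)"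
    by (rule ext) (simp add: True mnm_nz)
  then have "(\<lambda>N. mnm R j N / mnm R k N) \<longlonglongrightarrow> 1" by simp
  then have "\<exists>L\<ge>0. (\<lambda>N. mnm R j N / mnm R k N) \<longlonglongrightarrow> L" by (intro exI[of _ 1]) simp
  then show ?thesis by (rule disjI1)
next
  case False
  have "m \<noteq> 0"
  proof
    assume "m = 0"
    then have "j = (\<lambda>e. 0)" "k = (\<lambda>e. 0)" using degs_zero[of j R] degs_zero[of k R] j k by simp_all
    then show False using False by simp
  qed
  then have m1: "m \<ge> 1" by simp
  have A2: "\<forall>m::nat. m \<ge> 1 \<longrightarrow> ordered_family (degs R m) (\<lambda>k N. \<Prod>e\<in>pos_pairs R. R N (fst e) (snd e) ^ k e)"
    using A unfolding assumption_A_def degs_def by (rule conjunct2)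
  have of: "ordered_family (degs R m) (\<lambda>k N. mnm R k N)"
    using A2 m1 unfolding mnm_def by blast
  have conv: "convergent (\<lambda>N. arctan (mnm R j N / mnm R k N))"
    using of[unfolded ordered_family_def, rule_format, OF j k False] .
  have pos: "\<forall>N. mnm R j N / mnm R k N > 0" by (intro allI divide_pos_pos mnm_pos)
  show ?thesis by (rule arctan_conv_cases[OF pos conv])
qed

definition domi :: "(nat \<Rightarrow> 'a \<Rightarrow> 'a \<Rightarrow> real) \<Rightarrow> ('a \<times> 'a \<Rightarrow> nat) \<Rightarrow> ('a \<times> 'a \<Rightarrow> nat) \<Rightarrow> bool" where
  "domi R j k \<longleftrightarrow> (\<exists>L. (\<lambda>N. mnm R j N / mnm R k N) \<longlonglongrightarrow> L)"

lemma domi_refl: "domi R k k"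
proof -
  have "(\<lambda>N. mnm R k N / mnm R k N) = (\<lambda>N. 1)" using mnm_pos[of R k]
    by (intro ext) (simp add: less_imp_neq[symmetric])
  then show ?thesis unfolding domi_def by auto
qed

lemma domi_trans: "domi R i j \<Longrightarrow> domi R j k \<Longrightarrow> domi R i k"
proof -
  assume "domi R i j" "domi R j k"
  then obtain L1 L2 where l1: "(\<lambda>N. mnm R i N / mnm R j N) \<longlonglongrightarrow> L1"
    and l2: "(\<lambda>N. mnm R j N / mnm R k N) \<longlonglongrightarrow> L2" unfolding domi_def by blast
  have "(\<lambda>N. (mnm R i N / mnm R j N) * (mnm R j N / mnm R k N)) \<longlonglongrightarrow> L1 * L2"
    by (rule tendsto_mult[OF l1 l2])
  moreover have "(\<lambda>N. (mnm R i N / mnm R j N) * (mnm R j N / mnm R k N)) = (\<lambda>N. mnm R i N / mnm R k N)"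
    using mnm_pos[of R j] by (intro ext) (simp add: less_imp_neq[symmetric])
  ultimately show ?thesis unfolding domi_def by auto
qed

lemma domi_total:
  assumes A: "assumption_A (R :: nat \<Rightarrow> 'a::finite \<Rightarrow> 'a \<Rightarrow> real)"
    and j: "j \<in> degs R m" and k: "k \<in> degs R m"
  shows "domi R j k \<or> domi R k j"
proof -
  from degs_ratio[OF A j k] show ?thesis
  proof
    assume "\<exists>L\<ge>0. (\<lambda>N. mnm R j N / mnm R k N) \<longlonglongrightarrow> L"
    then show ?thesis unfolding domi_def by blast
  next
    assume "filterlim (\<lambda>N. mnm R j N / mnm R k N) at_top sequentially"
    then have "(\<lambda>N. inverse (mnm R j N / mnm R k N)) \<longlonglongrightarrow> 0"
      by (rule tendsto_inverse_0_at_top)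
    then have "(\<lambda>N. mnm R k N / mnm R j N) \<longlonglongrightarrow> 0" by simp
    then show ?thesis unfolding domi_def by blast
  qed
qed

lemma domi_max:
  assumes A: "assumption_A (R :: nat \<Rightarrow> 'a::finite \<Rightarrow> 'a \<Rightarrow> real)"
  shows "finite S \<Longrightarrow> S \<noteq> {} \<Longrightarrow> S \<subseteq> degs R m \<Longrightarrow> \<exists>k\<in>S. \<forall>j\<in>S. domi R j k"
proof (induction S rule: finite_ne_induct)
  case (singleton x)
  then show ?case using domi_refl by blast
next
  case (insert x F)
  then obtain k where k: "k \<in> F" "\<forall>j\<in>F. domi R j k" by auto
  have xd: "x \<in> degs R m" and kd: "k \<in> degs R m" using insert.prems k(1) by auto
  show ?case
  proof (cases "domi R x k")
    case True then show ?thesis using k by blast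
  next
    case False
    then have "domi R k x" using domi_total[OF A xd kd] by blast
    have "\<forall>j\<in>insert x F. domi R j x"
    proof
      fix j assume "j \<in> insert x F"
      then show "domi R j x"
      proof
        assume "j = x" then show ?thesis using domi_refl by simp
      next
        assume "j \<in> F" then show ?thesis using k(2) domi_trans[OF _ \<open>domi R k x\<close>] by blast
      qed
    qed
    then show ?thesis by blast
  qed
qed

lemma sum_list_divide_aux:
  fixes g :: "'b \<Rightarrow> real"
  shows "(\<Sum>x\<leftarrow>xs. g x) / M = (\<Sum>x\<leftarrow>xs. g x / M)"
  by (induction xs) (simp_all add: add_divide_distrib)

lemma sum_list_tendsto_aux:
  fixes g :: "'b \<Rightarrow> nat \<Rightarrow> real"
  shows "(\<forall>x\<in>set xs. \<exists>L. (\<lambda>N. g x N) \<longlonglongrightarrow> L) \<Longrightarrow> \<exists>A. (\<lambda>N. \<Sum>x\<leftarrow>xs. g x N) \<longlonglongrightarrow> A"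
proof (induction xs)
  case Nil then show ?case by auto
next
  case (Cons a xs)
  then obtain L A where "(\<lambda>N. g a N) \<longlonglongrightarrow> L" "(\<lambda>N. \<Sum>x\<leftarrow>xs. g x N) \<longlonglongrightarrow> A" by auto
  then have "(\<lambda>N. g a N + (\<Sum>x\<leftarrow>xs. g x N)) \<longlonglongrightarrow> L + A" by (rule tendsto_add)
  then show ?case by auto
qed

lemma Spos_list_lim:
  assumes xs: "\<forall>ck\<in>set xs. fst ck > 0 \<and> domi R (snd ck) k"
  shows "\<exists>A. (\<lambda>N. (\<Sum>ck\<leftarrow>xs. fst ck * mnm R (snd ck) N) / mnm R k N) \<longlonglongrightarrow> A"
proof -
  have "\<exists>A. (\<lambda>N. \<Sum>ck\<leftarrow>xs. fst ck * (mnm R (snd ck) N / mnm R k N)) \<longlonglongrightarrow> A"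
  proof (rule sum_list_tendsto_aux, rule ballI)
    fix ck assume "ck \<in> set xs"
    then obtain L where "(\<lambda>N. mnm R (snd ck) N / mnm R k N) \<longlonglongrightarrow> L" using xs domi_def by blast
    then show "\<exists>L. (\<lambda>N. fst ck * (mnm R (snd ck) N / mnm R k N)) \<longlonglongrightarrow> L"
      using tendsto_mult_left by blast
  qed
  then show ?thesis by (simp add: sum_list_divide_aux)
qed

lemma Spos_ratio:
  assumes A: "assumption_A (R :: nat \<Rightarrow> 'a::finite \<Rightarrow> 'a \<Rightarrow> real)"
    and f: "Spos R m f" and g: "Spos R m g"
  shows "(\<exists>L\<ge>0. (\<lambda>N. f N / g N) \<longlonglongrightarrow> L) \<or> filterlim (\<lambda>N. f N / g N) at_top sequentially"
proof -
  obtain xs where xs: "xs \<noteq> []" "\<forall>ck\<in>set xs. fst ck > 0 \<and> snd ck \<in> degs R m"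
    "\<forall>N. f N = (\<Sum>ck\<leftarrow>xs. fst ck * mnm R (snd ck) N)" using f unfolding Spos_def by blast
  obtain ys where ys: "ys \<noteq> []" "\<forall>ck\<in>set ys. fst ck > 0 \<and> snd ck \<in> degs R m"
    "\<forall>N. g N = (\<Sum>ck\<leftarrow>ys. fst ck * mnm R (snd ck) N)" using g unfolding Spos_def by blast
  define S where "S = snd ` set (xs @ ys)"
  have "finite S" "S \<noteq> {}" "S \<subseteq> degs R m" using xs ys by (auto simp: S_def)
  then obtain k where k: "k \<in> S" "\<forall>j\<in>S. domi R j k" using domi_max[OF A] by blast
  obtain a where a: "(\<lambda>N. f N / mnm R k N) \<longlonglongrightarrow> a"
    using Spos_list_lim[of xs R k] xs k(2) xs(3) unfolding S_def by auto
  obtain b where b: "(\<lambda>N. g N / mnm R k N) \<longlonglongrightarrow> b"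
    using Spos_list_lim[of ys R k] ys k(2) ys(3) unfolding S_def by auto
  have fpos: "f N > 0" and gpos: "g N > 0" for N using Spos_pos f g by blast+
  have a0: "a \<ge> 0" by (rule tendsto_lowerbound[OF a]) (intro always_eventually allI divide_nonneg_pos less_imp_le fpos mnm_pos, simp)
  have b0: "b \<ge> 0" by (rule tendsto_lowerbound[OF b]) (intro always_eventually allI divide_nonneg_pos less_imp_le gpos mnm_pos, simp)
  have lowb: "c \<le> b" if "(c, k) \<in> set ys" for c
  proof (rule tendsto_lowerbound[OF b], rule always_eventually, rule allI)
    fix N
    have "c * mnm R k N \<le> (\<Sum>ck\<leftarrow>ys. fst ck * mnm R (snd ck) N)"
    proof -
      have nn: "\<forall>x\<in>set ys. 0 \<le> fst x * mnm R (snd x) N"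
      proof
        fix x assume "x \<in> set ys"
        then have "fst x > 0" using ys(2) by blast
        then show "0 \<le> fst x * mnm R (snd x) N" using mnm_pos[of R "snd x" N] by simp
      qed
      show ?thesis using sum_list_ge_member[OF that nn] by simp
    qed
    then have "c * mnm R k N \<le> g N" using ys(3) by simp
    then show "c \<le> g N / mnm R k N" using mnm_pos[of R k N] by (simp add: field_simps)
  qed simp
  have lowa: "c \<le> a" if "(c, k) \<in> set xs" for c
  proof (rule tendsto_lowerbound[OF a], rule always_eventually, rule allI)
    fix N
    have "c * mnm R k N \<le> (\<Sum>ck\<leftarrow>xs. fst ck * mnm R (snd ck) N)"
    proof -
      have nn: "\<forall>x\<in>set xs. 0 \<le> fst x * mnm R (snd x) N"
      proof
        fix x assume "x \<in> set xs"
        then have "fst x > 0" using xs(2) by blast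
        then show "0 \<le> fst x * mnm R (snd x) N" using mnm_pos[of R "snd x" N] by simp
      qed
      show ?thesis using sum_list_ge_member[OF that nn] by simp
    qed
    then have "c * mnm R k N \<le> f N" using xs(3) by simp
    then show "c \<le> f N / mnm R k N" using mnm_pos[of R k N] by (simp add: field_simps)
  qed simp
  have eq: "(\<lambda>N. (f N / mnm R k N) / (g N / mnm R k N)) = (\<lambda>N. f N / g N)"
    using mnm_pos[of R k] by (intro ext) (simp add: less_imp_neq[symmetric])
  show ?thesis
  proof (cases "b > 0")
    case True
    have "(\<lambda>N. (f N / mnm R k N) / (g N / mnm R k N)) \<longlonglongrightarrow> a / b"
      using a b True by (intro tendsto_divide) auto
    then have "(\<lambda>N. f N / g N) \<longlonglongrightarrow> a / b" unfolding eq .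
    moreover have "a / b \<ge> 0" using a0 b0 by simp
    ultimately show ?thesis by blast
  next
    case False
    then have b00: "b = 0" using b0 by simp
    have "k \<notin> snd ` set ys"
    proof
      assume "k \<in> snd ` set ys"
      then obtain ck where "ck \<in> set ys" "k = snd ck" by blast
      then have c: "(fst ck, k) \<in> set ys" by simp
      have "fst ck > 0" using ys(2) \<open>ck \<in> set ys\<close> by blast
      then show False using lowb[OF c] b00 by simp
    qed
    have "k \<in> snd ` set xs" using k(1) \<open>k \<notin> snd ` set ys\<close> by (auto simp: S_def)
    then obtain ck where "ck \<in> set xs" "k = snd ck" by blast
    then have c: "(fst ck, k) \<in> set xs" by simp
    have "fst ck > 0" using xs(2) \<open>ck \<in> set xs\<close> by blast
    then have apos: "a > 0" using lowa[OF c] by simp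
        have "filterlim (\<lambda>N. (f N / mnm R k N) / (g N / mnm R k N)) at_top sequentially"
      by (rule LIM_at_top_divide[OF a apos]) (use b b00 in simp, intro always_eventually allI divide_pos_pos gpos mnm_pos)
    then show ?thesis using eq by simp
  qed
qed



definition EdS :: "(nat \<Rightarrow> 'a \<Rightarrow> 'a \<Rightarrow> real) \<Rightarrow> nat \<Rightarrow> 'a set \<Rightarrow> ('a \<Rightarrow> 'a \<Rightarrow> nat \<Rightarrow> real) \<Rightarrow> ('a \<times> 'a) set" where
  "EdS R d V P = {(a, b). a \<in> V \<and> b \<in> V \<and> a \<noteq> b \<and> Spos R d (P a b)}"

definition short :: "('a \<times> 'a) set \<Rightarrow> 'a set \<Rightarrow> 'a \<Rightarrow> ('a \<times> 'a) set" where
  "short E V z = {(u, v). u \<in> V - {z} \<and> v \<in> V - {z} \<and> u \<noteq> v \<and> ((u, v) \<in> E \<or> ((u, z) \<in> E \<and> (z, v) \<in> E))}"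

lemma shortcut:
  assumes path: "(a, x) \<in> E\<^sup>*" and aV: "a \<in> V" and az: "a \<noteq> z"
    and EV: "E \<subseteq> V \<times> V" and irr: "\<forall>u v. (u, v) \<in> E \<longrightarrow> u \<noteq> v"
  shows "(x \<noteq> z \<longrightarrow> (a, x) \<in> (short E V z)\<^sup>*) \<and>
         (x = z \<longrightarrow> (\<exists>y. (a, y) \<in> (short E V z)\<^sup>* \<and> (y, z) \<in> E \<and> y \<noteq> z))"
  using path
proof (induction rule: rtrancl_induct)
  case base
  then show ?case using az by simp
next
  case (step y w)
  have yV: "y \<in> V" and wV: "w \<in> V" using step.hyps(2) EV by auto
  have yw: "y \<noteq> w" using step.hyps(2) irr by blast
  show ?case
  proof (cases "y = z")
    case False
    then have ay: "(a, y) \<in> (short E V z)\<^sup>*" using step.IH by blast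
    show ?thesis
    proof (cases "w = z")
      case True
      then show ?thesis using ay step.hyps(2) False by blast
    next
      case False
      have "(y, w) \<in> short E V z" unfolding short_def
        using yV wV yw \<open>y \<noteq> z\<close> False step.hyps(2) by blast
      then show ?thesis using ay False by (meson rtrancl_into_rtrancl)
    qed
  next
    case True
    then obtain y' where y': "(a, y') \<in> (short E V z)\<^sup>*" "(y', z) \<in> E" "y' \<noteq> z"
      using step.IH by blast
    have wz: "w \<noteq> z" using True yw by simp
    have y'V: "y' \<in> V" using y'(2) EV by auto
    have "(a, w) \<in> (short E V z)\<^sup>*"
    proof (cases "y' = w")
      case True then show ?thesis using y'(1) by simp
    next
      case False
      have "(y', w) \<in> short E V z" unfolding short_def
        using y'V wV False y'(2,3) wz step.hyps(2) \<open>y = z\<close> by blast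
      then show ?thesis using y'(1) by (meson rtrancl_into_rtrancl)
    qed
    then show ?thesis using wz by blast
  qed
qed

lemma sum_split_z:
  assumes "finite V" "z \<in> V" "b \<noteq> z"
  shows "(\<Sum>a\<in>V - {b}. g a) = g z + (\<Sum>a\<in>V - {z} - {b}. g a)"
proof -
  have "V - {b} = insert z (V - {z} - {b})" using assms by auto
  then show ?thesis using assms(1) by simp
qed

lemma sum_split_b:
  assumes "finite V" "b \<in> V"
  shows "(\<Sum>a\<in>V. g a) = g b + (\<Sum>a\<in>V - {b}. g a)"
  using assms by (simp add: sum.remove)

lemma inv_transfer:
  fixes mu :: "'a \<Rightarrow> real" and Q :: "'a \<Rightarrow> 'a \<Rightarrow> real"
  assumes fin: "finite V" and zV: "z \<in> V" and bV: "b \<in> V" and bz: "b \<noteq> z"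
    and invb: "(\<Sum>a\<in>V - {b}. mu a * Q a b) = mu b * (\<Sum>c\<in>V - {b}. Q b c)"
    and invz: "(\<Sum>a\<in>V - {z}. mu a * Q a z) = mu z * (\<Sum>c\<in>V - {z}. Q z c)"
    and Lam: "L = (\<Sum>c\<in>V - {z}. Q z c)"
  shows "(\<Sum>a\<in>V - {z} - {b}. mu a * (Q a b * L + Q a z * Q z b)) =
         mu b * (\<Sum>c\<in>V - {z} - {b}. Q b c * L + Q b z * Q z c)"
proof -
  define S1 where "S1 = (\<Sum>a\<in>V - {z} - {b}. mu a * Q a b)"
  define S2 where "S2 = (\<Sum>a\<in>V - {z} - {b}. mu a * Q a z)"
  define T1 where "T1 = (\<Sum>c\<in>V - {z} - {b}. Q b c)"
  define T2 where "T2 = (\<Sum>c\<in>V - {z} - {b}. Q z c)"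
  have fin': "finite (V - {z})" using fin by simp
  have bV': "b \<in> V - {z}" using bV bz by simp
  have e1: "mu z * Q z b + S1 = mu b * (Q b z + T1)"
    using invb sum_split_z[OF fin zV bz, of "\<lambda>a. mu a * Q a b"] sum_split_z[OF fin zV bz, of "\<lambda>c. Q b c"]
    unfolding S1_def T1_def by simp
  have e2: "mu b * Q b z + S2 = mu z * L"
    using invz sum_split_b[OF fin' bV', of "\<lambda>a. mu a * Q a z"] Lam unfolding S2_def by simp
  have e3: "L = Q z b + T2"
    using Lam sum_split_b[OF fin' bV', of "\<lambda>c. Q z c"] unfolding T2_def by simp
  have l: "(\<Sum>a\<in>V - {z} - {b}. mu a * (Q a b * L + Q a z * Q z b)) = L * S1 + Q z b * S2"
    unfolding S1_def S2_def by (simp add: algebra_simps sum.distrib sum_distrib_left sum_distrib_right)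
  have r: "(\<Sum>c\<in>V - {z} - {b}. Q b c * L + Q b z * Q z c) = L * T1 + Q b z * T2"
    unfolding T1_def T2_def by (simp add: algebra_simps sum.distrib sum_distrib_left sum_distrib_right)
  have S1e: "S1 = mu b * (Q b z + T1) - mu z * Q z b" using e1 by simp
  have S2e: "S2 = mu z * L - mu b * Q b z" using e2 by simp
  have T2e: "T2 = L - Q z b" using e3 by simp
  show ?thesis unfolding l r S1e S2e T2e by (simp add: algebra_simps)
qed

lemma elim_main:
  fixes R :: "nat \<Rightarrow> 'a::finite \<Rightarrow> 'a \<Rightarrow> real"
  shows "card V = n \<Longrightarrow> V \<noteq> {} \<Longrightarrow> (\<forall>a\<in>V. \<forall>b\<in>V. a \<noteq> b \<longrightarrow> Sz R d (P a b)) \<Longrightarrow>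
    (\<forall>a\<in>V. \<forall>b\<in>V. (a, b) \<in> (EdS R d V P)\<^sup>*) \<Longrightarrow>
    \<exists>m f. (\<forall>a\<in>V. Spos R m (f a)) \<and>
      (\<forall>N mu. (\<forall>b\<in>V. (\<Sum>a\<in>V - {b}. mu a * P a b N) = mu b * (\<Sum>c\<in>V - {b}. P b c N))
         \<longrightarrow> (\<exists>c. \<forall>a\<in>V. mu a = c * f a N))"
proof (induction n arbitrary: V P d)
  case 0
  have "finite V" by simp
  then show ?case using 0 by simp
next
  case (Suc n)
  have finV: "finite V" by simp
  obtain z where zV: "z \<in> V" using Suc.prems(2) by blast
  show ?case
  proof (cases "n = 0")
    case True
    then have "card V = 1" using Suc.prems(1) by simp
    then obtain v where "V = {v}" using card_1_singletonE by blast
    then have Vz: "V = {z}" using zV by simp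
    show ?thesis
    proof (intro exI conjI)
      show "\<forall>a\<in>V. Spos R 0 ((\<lambda>a N. 1) a)" using Spos_one by blast
      show "\<forall>N mu. (\<forall>b\<in>V. (\<Sum>a\<in>V - {b}. mu a * P a b N) = mu b * (\<Sum>c\<in>V - {b}. P b c N))
         \<longrightarrow> (\<exists>c. \<forall>a\<in>V. mu a = c * (\<lambda>a N. 1::real) a N)"
        using Vz by auto
    qed
  next
    case False
    define V' where "V' = V - {z}"
    have cardV': "card V' = n" using Suc.prems(1) zV finV unfolding V'_def by simp
    have V'ne: "V' \<noteq> {}" using cardV' False by auto
    have finV': "finite V'" by simp
    define Ed where "Ed = EdS R d V P"
    have EdV: "Ed \<subseteq> V \<times> V" unfolding Ed_def EdS_def by auto
    have Edirr: "\<forall>u v. (u, v) \<in> Ed \<longrightarrow> u \<noteq> v" unfolding Ed_def EdS_def by auto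
    have conn: "\<forall>a\<in>V. \<forall>b\<in>V. (a, b) \<in> Ed\<^sup>*" using Suc.prems(4) unfolding Ed_def .
    obtain a0 where a0: "a0 \<in> V'" using V'ne by blast
    have a0z: "a0 \<noteq> z" "a0 \<in> V" using a0 unfolding V'_def by auto
    have "(z, a0) \<in> Ed\<^sup>*" using conn zV a0z by blast
    then obtain w where zw: "(z, w) \<in> Ed"
      using a0z(1) by (metis converse_rtranclE)
    have wV': "w \<in> V'" and Spzw: "Spos R d (P z w)" using zw unfolding Ed_def EdS_def V'_def by auto
    have "(a0, z) \<in> Ed\<^sup>*" using conn zV a0z by blast
    then obtain y where yz: "(y, z) \<in> Ed"
      using a0z(1) by (metis rtranclE)
    have yV': "y \<in> V'" and Spyz: "Spos R d (P y z)" using yz unfolding Ed_def EdS_def V'_def by auto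
    define Lam where "Lam = (\<lambda>N. \<Sum>w\<in>V'. P z w N)"
    have SzPz: "\<forall>w\<in>V'. Sz R d (P z w)" using Suc.prems(3) zV unfolding V'_def by auto
    have SLam: "Spos R d Lam"
      using Sz_sum[OF finV' SzPz] wV' Spzw unfolding Lam_def by blast
    have Lpos: "Lam N > 0" for N using Spos_pos[OF SLam] .
    define P' where "P' = (\<lambda>a b N. P a b N * Lam N + P a z N * P z b N)"
    have SzP: "Sz R d (P a b)" if "a \<in> V" "b \<in> V" "a \<noteq> b" for a b
      using Suc.prems(3) that by blast
    have SzP': "\<forall>a\<in>V'. \<forall>b\<in>V'. a \<noteq> b \<longrightarrow> Sz R (d + d) (P' a b)"
    proof (intro ballI impI)
      fix a b assume ab: "a \<in> V'" "b \<in> V'" "a \<noteq> b"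
      have h1: "Sz R (d + d) (\<lambda>N. P a b N * Lam N)"
        using Sz_mult[OF SzP Spos_Sz[OF SLam]] ab unfolding V'_def by auto
      have h2: "Sz R (d + d) (\<lambda>N. P a z N * P z b N)"
        using Sz_mult[OF SzP SzP, of a z z b] ab zV unfolding V'_def by auto
      show "Sz R (d + d) (P' a b)" using Sz_add[OF h1 h2] unfolding P'_def .
    qed
    have sub: "short Ed V z \<subseteq> EdS R (d + d) V' P'"
    proof
      fix e assume e: "e \<in> short Ed V z"
      obtain u v where uv: "e = (u, v)" by (cases e)
      have uvV: "u \<in> V'" "v \<in> V'" "u \<noteq> v" and dis: "(u, v) \<in> Ed \<or> ((u, z) \<in> Ed \<and> (z, v) \<in> Ed)"
        using e unfolding uv short_def V'_def by auto
      have uV: "u \<in> V" "v \<in> V" "u \<noteq> z" "v \<noteq> z" using uvV unfolding V'_def by auto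
      have "Spos R (d + d) (P' u v)"
        using dis
      proof
        assume "(u, v) \<in> Ed"
        then have sp: "Spos R d (P u v)" unfolding Ed_def EdS_def by auto
        have h1: "Spos R (d + d) (\<lambda>N. P u v N * Lam N)" using Spos_mult[OF sp SLam] .
        have h2: "Sz R (d + d) (\<lambda>N. P u z N * P z v N)"
          using Sz_mult[OF SzP SzP, of u z z v] uV zV by auto
        show ?thesis using Spos_add_Sz[OF h1 h2] unfolding P'_def .
      next
        assume "(u, z) \<in> Ed \<and> (z, v) \<in> Ed"
        then have sp1: "Spos R d (P u z)" and sp2: "Spos R d (P z v)" unfolding Ed_def EdS_def by auto
        have h1: "Sz R (d + d) (\<lambda>N. P u v N * Lam N)"
          using Sz_mult[OF SzP Spos_Sz[OF SLam], of u v] uV uvV(3) by auto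
        have h2: "Spos R (d + d) (\<lambda>N. P u z N * P z v N)" using Spos_mult[OF sp1 sp2] .
        show ?thesis using Sz_add_Spos[OF h1 h2] unfolding P'_def .
      qed
      then show "e \<in> EdS R (d + d) V' P'" unfolding uv EdS_def using uvV by auto
    qed
    have conn': "\<forall>a\<in>V'. \<forall>b\<in>V'. (a, b) \<in> (EdS R (d + d) V' P')\<^sup>*"
    proof (intro ballI)
      fix a b assume ab: "a \<in> V'" "b \<in> V'"
      have "(a, b) \<in> Ed\<^sup>*" using conn ab unfolding V'_def by auto
      then have "(a, b) \<in> (short Ed V z)\<^sup>*"
        using shortcut[of a b Ed V z] ab EdV Edirr unfolding V'_def by auto
      then show "(a, b) \<in> (EdS R (d + d) V' P')\<^sup>*" using rtrancl_mono[OF sub] by blast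
    qed
    obtain m' f' where f': "\<forall>a\<in>V'. Spos R m' (f' a)"
      and fmu: "\<forall>N mu. (\<forall>b\<in>V'. (\<Sum>a\<in>V' - {b}. mu a * P' a b N) = mu b * (\<Sum>c\<in>V' - {b}. P' b c N))
         \<longrightarrow> (\<exists>c. \<forall>a\<in>V'. mu a = c * f' a N)"
      using Suc.IH[OF cardV' V'ne SzP' conn'] by blast
    define f where "f = (\<lambda>a. if a = z then (\<lambda>N. \<Sum>a\<in>V'. f' a N * P a z N) else (\<lambda>N. f' a N * Lam N))"
    have fS: "\<forall>a\<in>V. Spos R (m' + d) (f a)"
    proof
      fix a assume aV: "a \<in> V"
      show "Spos R (m' + d) (f a)"
      proof (cases "a = z")
        case True
        have all: "\<forall>x\<in>V'. Sz R (m' + d) (\<lambda>N. f' x N * P x z N)"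
        proof
          fix x assume x: "x \<in> V'"
          have "Sz R d (P x z)" using SzP[of x z] x zV unfolding V'_def by auto
          then show "Sz R (m' + d) (\<lambda>N. f' x N * P x z N)"
            using Sz_mult[OF Spos_Sz[OF f'[rule_format, OF x]]] by blast
        qed
        have ex: "Spos R (m' + d) (\<lambda>N. f' y N * P y z N)"
          using Spos_mult[OF f'[rule_format, OF yV'] Spyz] .
        have "Spos R (m' + d) (\<lambda>N. \<Sum>x\<in>V'. f' x N * P x z N)"
          using Sz_sum[OF finV' all] yV' ex by blast
        then show ?thesis unfolding f_def using True by simp
      next
        case False
        then have aV': "a \<in> V'" using aV unfolding V'_def by simp
        have "Spos R (m' + d) (\<lambda>N. f' a N * Lam N)" using Spos_mult[OF f'[rule_format, OF aV'] SLam] .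
        then show ?thesis unfolding f_def using False by simp
      qed
    qed
    have fmu': "\<exists>c. \<forall>a\<in>V. mu a = c * f a N"
      if inv: "\<forall>b\<in>V. (\<Sum>a\<in>V - {b}. mu a * P a b N) = mu b * (\<Sum>c\<in>V - {b}. P b c N)" for N mu
    proof -
      have invz: "(\<Sum>a\<in>V - {z}. mu a * P a z N) = mu z * (\<Sum>c\<in>V - {z}. P z c N)"
        using inv zV by blast
      have inv': "\<forall>b\<in>V'. (\<Sum>a\<in>V' - {b}. mu a * P' a b N) = mu b * (\<Sum>c\<in>V' - {b}. P' b c N)"
      proof
        fix b assume b: "b \<in> V'"
        have bV: "b \<in> V" "b \<noteq> z" using b unfolding V'_def by auto
        have invb: "(\<Sum>a\<in>V - {b}. mu a * P a b N) = mu b * (\<Sum>c\<in>V - {b}. P b c N)"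
          using inv bV by blast
        show "(\<Sum>a\<in>V' - {b}. mu a * P' a b N) = mu b * (\<Sum>c\<in>V' - {b}. P' b c N)"
          using inv_transfer[OF finV zV bV(1) bV(2) invb invz, of "Lam N"]
          unfolding P'_def V'_def Lam_def by simp
      qed
      obtain c where c: "\<forall>a\<in>V'. mu a = c * f' a N" using fmu inv' by blast
      have LN: "Lam N > 0" using Lpos .
      show ?thesis
      proof (intro exI[of _ "c / Lam N"] ballI)
        fix a assume aV: "a \<in> V"
        show "mu a = c / Lam N * f a N"
        proof (cases "a = z")
          case True
          have "mu z * Lam N = (\<Sum>a\<in>V'. mu a * P a z N)"
            using invz unfolding V'_def Lam_def by simp
          also have "\<dots> = (\<Sum>a\<in>V'. c * (f' a N * P a z N))"
            by (rule sum.cong) (use c in auto)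
          also have "\<dots> = c * f z N" unfolding f_def by (simp add: sum_distrib_left)
          finally have "mu z * Lam N = c * f z N" .
          then show ?thesis using True LN by (simp add: field_simps)
        next
          case False
          then have aV': "a \<in> V'" using aV unfolding V'_def by simp
          have "f a N = f' a N * Lam N" unfolding f_def using False by simp
          then show ?thesis using c aV' LN by simp
        qed
      qed
    qed
    show ?thesis using fS fmu' by blast
  qed
qed



lemma fe_nonneg:
  assumes "\<forall>y w. p y w \<ge> 0"
  shows "first_entr p F n z x \<ge> 0"
  using assms by (induction n arbitrary: z) (auto intro!: sum_nonneg mult_nonneg_nonneg)

lemma fe_bound:
  fixes p :: "'a::finite \<Rightarrow> 'a \<Rightarrow> real"
  assumes pn: "\<forall>y w. p y w \<ge> 0" and ps: "\<forall>y. (\<Sum>w\<in>UNIV. p y w) = 1"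
  shows "(\<Sum>x\<in>UNIV. \<Sum>n<K. first_entr p F n z x) \<le> 1"
proof (induction K arbitrary: z)
  case 0 then show ?case by simp
next
  case (Suc K)
  have split: "(\<Sum>n<Suc K. first_entr p F n z x) = first_entr p F 0 z x + (\<Sum>n<K. first_entr p F (Suc n) z x)" for x
    by (rule sum.lessThan_Suc_shift)
  show ?case
  proof (cases "z \<in> F")
    case True
    have "(\<Sum>x\<in>UNIV. \<Sum>n<Suc K. first_entr p F n z x) = (\<Sum>x\<in>UNIV. if z = x then 1 else 0)"
      unfolding split using True by simp
    also have "\<dots> = 1" by simp
    finally show ?thesis by simp
  next
    case False
    have "(\<Sum>x\<in>UNIV. \<Sum>n<Suc K. first_entr p F n z x) =
          (\<Sum>x\<in>UNIV. \<Sum>n<K. \<Sum>y\<in>UNIV. p z y * first_entr p F n y x)"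
      unfolding split using False by simp
    also have "\<dots> = (\<Sum>x\<in>UNIV. \<Sum>y\<in>UNIV. \<Sum>n<K. p z y * first_entr p F n y x)"
      by (rule sum.cong[OF refl], rule sum.swap)
    also have "\<dots> = (\<Sum>y\<in>UNIV. \<Sum>x\<in>UNIV. \<Sum>n<K. p z y * first_entr p F n y x)"
      by (rule sum.swap)
    also have "\<dots> = (\<Sum>y\<in>UNIV. p z y * (\<Sum>x\<in>UNIV. \<Sum>n<K. first_entr p F n y x))"
      by (simp add: sum_distrib_left)
    also have "\<dots> \<le> (\<Sum>y\<in>UNIV. p z y * 1)"
    proof (rule sum_mono)
      fix y
      show "p z y * (\<Sum>x\<in>UNIV. \<Sum>n<K. first_entr p F n y x) \<le> p z y * 1"
        using Suc.IH[of y] pn by (intro mult_left_mono) auto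
    qed
    also have "\<dots> = 1" using ps by simp
    finally show ?thesis .
  qed
qed

lemma fe_summable:
  fixes p :: "'a::finite \<Rightarrow> 'a \<Rightarrow> real"
  assumes pn: "\<forall>y w. p y w \<ge> 0" and ps: "\<forall>y. (\<Sum>w\<in>UNIV. p y w) = 1"
  shows "summable (\<lambda>n. first_entr p F n z x)"
proof (rule summableI_nonneg_bounded)
  show "0 \<le> first_entr p F n z x" for n using fe_nonneg pn by blast
  fix K
  have "(\<Sum>n<K. first_entr p F n z x) \<le> (\<Sum>x'\<in>UNIV. \<Sum>n<K. first_entr p F n z x')"
    by (rule member_le_sum) (auto intro!: sum_nonneg fe_nonneg pn)
  also have "\<dots> \<le> 1" by (rule fe_bound[OF pn ps])
  finally show "(\<Sum>n<K. first_entr p F n z x) \<le> 1" .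
qed

definition hfun :: "('a::finite \<Rightarrow> 'a \<Rightarrow> real) \<Rightarrow> 'a set \<Rightarrow> 'a \<Rightarrow> 'a \<Rightarrow> real" where
  "hfun p F z x = (\<Sum>n. first_entr p F n z x)"

lemma hfun_nonneg:
  assumes pn: "\<forall>y w. p y w \<ge> 0" and ps: "\<forall>y. (\<Sum>w\<in>UNIV. p y w) = 1"
  shows "hfun p F z x \<ge> 0"
  unfolding hfun_def by (rule suminf_nonneg[OF fe_summable[OF pn ps]]) (use fe_nonneg pn in blast)

lemma hfun_in:
  assumes pn: "\<forall>y w. p y w \<ge> 0" and ps: "\<forall>y. (\<Sum>w\<in>UNIV. p y w) = 1" and z: "z \<in> F"
  shows "hfun p F z x = (if z = x then 1 else 0)"
proof -
  have "hfun p F z x = first_entr p F 0 z x + (\<Sum>n. first_entr p F (Suc n) z x)"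
    unfolding hfun_def using suminf_split_head[OF fe_summable[OF pn ps]] by simp
  then show ?thesis using z by simp
qed

lemma hfun_out:
  fixes p :: "'a::finite \<Rightarrow> 'a \<Rightarrow> real"
  assumes pn: "\<forall>y w. p y w \<ge> 0" and ps: "\<forall>y. (\<Sum>w\<in>UNIV. p y w) = 1" and z: "z \<notin> F"
  shows "hfun p F z x = (\<Sum>y\<in>UNIV. p z y * hfun p F y x)"
proof -
  have "hfun p F z x = first_entr p F 0 z x + (\<Sum>n. first_entr p F (Suc n) z x)"
    unfolding hfun_def using suminf_split_head[OF fe_summable[OF pn ps]] by simp
  also have "\<dots> = (\<Sum>n. \<Sum>y\<in>UNIV. p z y * first_entr p F n y x)" using z by simp
  also have "\<dots> = (\<Sum>y\<in>UNIV. \<Sum>n. p z y * first_entr p F n y x)"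
    by (rule suminf_sum) (intro summable_mult fe_summable[OF pn ps])
  also have "\<dots> = (\<Sum>y\<in>UNIV. p z y * hfun p F y x)"
    unfolding hfun_def by (intro sum.cong refl suminf_mult fe_summable[OF pn ps])
  finally show ?thesis .
qed



lemma irr_nonneg: "irreducible_rates R \<Longrightarrow> a \<noteq> b \<Longrightarrow> R N a b \<ge> 0"
  unfolding irreducible_rates_def by blast

lemma hr_nonneg: "irreducible_rates R \<Longrightarrow> holding_rate R N y \<ge> 0"
  unfolding holding_rate_def by (rule sum_nonneg) (auto intro: irr_nonneg)

lemma hr_pos:
  fixes R :: "nat \<Rightarrow> 'a::finite \<Rightarrow> 'a \<Rightarrow> real"
  assumes irr: "irreducible_rates R" and two: "x \<noteq> y"
  shows "holding_rate R N y > 0"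
proof -
  have "(y, x) \<in> {(a, b). a \<noteq> b \<and> R N a b > 0}\<^sup>*" using irr unfolding irreducible_rates_def by blast
  then obtain w where "(y, w) \<in> {(a, b). a \<noteq> b \<and> R N a b > 0}"
    using two by (metis converse_rtranclE)
  then have w: "w \<noteq> y" "R N y w > 0" by auto
  show ?thesis unfolding holding_rate_def
    by (rule sum_pos2[of _ w]) (use w irr_nonneg[OF irr] in auto)
qed

lemma jp_nonneg: assumes irr: "irreducible_rates R" shows "jump_prob R N y w \<ge> 0"
proof (cases "w = y")
  case True then show ?thesis unfolding jump_prob_def by simp
next
  case False
  have "R N y w / holding_rate R N y \<ge> 0"
    by (rule divide_nonneg_nonneg[OF irr_nonneg[OF irr] hr_nonneg[OF irr]]) (use False in simp)
  then show ?thesis unfolding jump_prob_def using False by simp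
qed

lemma sum_remove_if:
  fixes f :: "'a::finite \<Rightarrow> real"
  shows "(\<Sum>w\<in>UNIV. if w = y then 0 else f w) = (\<Sum>w\<in>UNIV - {y}. f w)"
proof -
  have "(\<Sum>w\<in>UNIV. if w = y then 0 else f w) = (if y = y then 0 else f y) + (\<Sum>w\<in>UNIV - {y}. if w = y then 0 else f w)"
    by (rule sum.remove) auto
  also have "(\<Sum>w\<in>UNIV - {y}. if w = y then 0 else f w) = (\<Sum>w\<in>UNIV - {y}. f w)"
    by (rule sum.cong) auto
  finally show ?thesis by simp
qed

lemma jp_sum:
  fixes R :: "nat \<Rightarrow> 'a::finite \<Rightarrow> 'a \<Rightarrow> real"
  assumes "holding_rate R N y > 0"
  shows "(\<Sum>w\<in>UNIV. jump_prob R N y w) = 1"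
proof -
  have "(\<Sum>w\<in>UNIV. jump_prob R N y w) = (\<Sum>w\<in>UNIV - {y}. R N y w / holding_rate R N y)"
    unfolding jump_prob_def by (rule sum_remove_if)
  also have "\<dots> = holding_rate R N y / holding_rate R N y"
    unfolding holding_rate_def by (simp add: sum_divide_distrib[symmetric])
  finally show ?thesis using assms by simp
qed

lemma jp_mult:
  assumes "holding_rate R N y > 0"
  shows "holding_rate R N y * jump_prob R N y w = (if w = y then 0 else R N y w)"
  unfolding jump_prob_def using assms by simp

lemma hit_ge1:
  fixes p :: "'a::finite \<Rightarrow> 'a \<Rightarrow> real"
  assumes pn: "\<forall>y w. p y w \<ge> 0" and ps: "\<forall>y. (\<Sum>w\<in>UNIV. p y w) = 1"
    and Fne: "F \<noteq> {}" and conn: "\<forall>a b. (a, b) \<in> {(a, b). p a b > 0}\<^sup>*"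
  shows "(\<Sum>x\<in>F. hfun p F z x) \<ge> 1"
proof (rule ccontr)
  assume nz: "\<not> (\<Sum>x\<in>F. hfun p F z x) \<ge> 1"
  define u where "u = (\<lambda>y. 1 - (\<Sum>x\<in>F. hfun p F y x))"
  have uF: "u y = 0" if "y \<in> F" for y
  proof -
    have "(\<Sum>x\<in>F. hfun p F y x) = (\<Sum>x\<in>F. if y = x then 1 else 0)"
      by (rule sum.cong) (use hfun_in[OF pn ps that] in auto)
    also have "\<dots> = 1" using that by simp
    finally show ?thesis unfolding u_def by simp
  qed
  have uh: "u y = (\<Sum>w\<in>UNIV. p y w * u w)" if "y \<notin> F" for y
  proof -
    have "(\<Sum>x\<in>F. hfun p F y x) = (\<Sum>x\<in>F. \<Sum>w\<in>UNIV. p y w * hfun p F w x)"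
      by (rule sum.cong) (use hfun_out[OF pn ps that] in auto)
    also have "\<dots> = (\<Sum>w\<in>UNIV. \<Sum>x\<in>F. p y w * hfun p F w x)" by (rule sum.swap)
    also have "\<dots> = (\<Sum>w\<in>UNIV. p y w * (\<Sum>x\<in>F. hfun p F w x))" by (simp add: sum_distrib_left)
    finally have e: "(\<Sum>x\<in>F. hfun p F y x) = (\<Sum>w\<in>UNIV. p y w * (\<Sum>x\<in>F. hfun p F w x))" .
    have "(\<Sum>w\<in>UNIV. p y w * u w) = (\<Sum>w\<in>UNIV. p y w) - (\<Sum>w\<in>UNIV. p y w * (\<Sum>x\<in>F. hfun p F w x))"
      unfolding u_def by (simp add: right_diff_distrib sum_subtractf)
    then show ?thesis using e ps unfolding u_def by simp
  qed
  define M where "M = Max (range u)"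
  have uM: "u y \<le> M" for y unfolding M_def by (rule Max_ge) auto
  have "M \<in> range u" unfolding M_def by (rule Max_in) auto
  then obtain y0 where y0: "u y0 = M" by auto
  have Mpos: "M > 0" using nz uM[of z] unfolding u_def by simp
  have reach: "u y = M" if "(y0, y) \<in> {(a, b). p a b > 0}\<^sup>*" for y
    using that
  proof (induction rule: rtrancl_induct)
    case base then show ?case using y0 .
  next
    case (step y w)
    have pyw: "p y w > 0" using step.hyps(2) by simp
    have yF: "y \<notin> F" using uF step.IH Mpos by force
    have "(\<Sum>w'\<in>UNIV. p y w' * (M - u w')) = M * (\<Sum>w'\<in>UNIV. p y w') - (\<Sum>w'\<in>UNIV. p y w' * u w')"
      by (simp add: right_diff_distrib sum_subtractf sum_distrib_left mult.commute)
    also have "\<dots> = 0" using ps uh[OF yF] step.IH by simp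
    finally have s0: "(\<Sum>w'\<in>UNIV. p y w' * (M - u w')) = 0" .
    have nn: "\<And>w'. w' \<in> UNIV \<Longrightarrow> 0 \<le> p y w' * (M - u w')"
      using pn uM by (simp add: mult_nonneg_nonneg)
    have "\<forall>w'\<in>UNIV. p y w' * (M - u w') = 0" using iffD1[OF sum_nonneg_eq_0_iff[OF finite nn] s0] .
    then have "p y w * (M - u w) = 0" by blast
    then show ?case using pyw by simp
  qed
  obtain x where xF: "x \<in> F" using Fne by blast
  have "u x = M" using reach conn by blast
  then show False using uF[OF xF] Mpos by simp
qed



lemma hit_hfun: "hit_at R N F z x = hfun (jump_prob R N) F z x"
  unfolding hit_at_def hfun_def ..

lemma trace_balance:
  fixes R :: "nat \<Rightarrow> 'a::finite \<Rightarrow> 'a \<Rightarrow> real" and mu :: "nat \<Rightarrow> 'a \<Rightarrow> real"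
  assumes irr: "irreducible_rates R" and inv: "invariant_prob R mu"
    and hp: "\<forall>y. holding_rate R N y > 0" and Fne: "F \<noteq> {}" and XF: "X \<subseteq> F"
  shows "(\<Sum>eta\<in>F - X. mu N eta * (\<Sum>xi\<in>X. trace_rate R N F eta xi))
         \<le> (\<Sum>eta\<in>X. mu N eta * (\<Sum>xi\<in>F - X. trace_rate R N F eta xi))"
proof -
  define lam where "lam = holding_rate R N"
  define pj where "pj = jump_prob R N"
  define h where "h = hfun pj F"
  define T where "T = (\<lambda>eta xi. lam eta * (\<Sum>y\<in>UNIV. pj eta y * h y xi))"
  have pn: "\<forall>y w. pj y w \<ge> 0" unfolding pj_def using jp_nonneg[OF irr] by blast
  have ps: "\<forall>y. (\<Sum>w\<in>UNIV. pj y w) = 1" unfolding pj_def using jp_sum hp by blast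
  have lampos: "lam y > 0" for y unfolding lam_def using hp by blast
  have munn: "mu N y \<ge> 0" for y using inv unfolding invariant_prob_def by blast
  have conn: "\<forall>a b. (a, b) \<in> {(a, b). pj a b > 0}\<^sup>*"
  proof (intro allI)
    fix a b
    have "(a, b) \<in> {(a, b). a \<noteq> b \<and> R N a b > 0}\<^sup>*" using irr unfolding irreducible_rates_def by blast
    moreover have "{(a, b). a \<noteq> b \<and> R N a b > 0} \<subseteq> {(a, b). pj a b > 0}"
      using hp unfolding pj_def jump_prob_def by (auto intro: divide_pos_pos)
    ultimately show "(a, b) \<in> {(a, b). pj a b > 0}\<^sup>*" using rtrancl_mono by blast
  qed
  have hin: "h y x = (if y = x then 1 else 0)" if "y \<in> F" for y x
    unfolding h_def using hfun_in[OF pn ps that] .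
  have hout: "h y x = (\<Sum>w\<in>UNIV. pj y w * h w x)" if "y \<notin> F" for y x
    unfolding h_def using hfun_out[OF pn ps that] .
  have hge: "(\<Sum>x\<in>F. h y x) \<ge> 1" for y
    unfolding h_def using hit_ge1[OF pn ps Fne conn] .
  have hnn: "h y x \<ge> 0" for y x unfolding h_def using hfun_nonneg[OF pn ps] .
  have Tnn: "T eta xi \<ge> 0" for eta xi
    unfolding T_def by (intro mult_nonneg_nonneg sum_nonneg) (use lampos pn hnn in \<open>auto intro: less_imp_le\<close>)
  have lp: "lam eta * pj eta y = (if y = eta then 0 else R N eta y)" for eta y
    unfolding lam_def pj_def using jp_mult hp by blast
  have inv1: "(\<Sum>eta\<in>UNIV. mu N eta * (lam eta * pj eta y)) = mu N y * lam y" for y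
  proof -
    have "(\<Sum>eta\<in>UNIV. mu N eta * (lam eta * pj eta y)) = (\<Sum>eta\<in>UNIV. if eta = y then 0 else mu N eta * R N eta y)"
      by (rule sum.cong) (auto simp: lp)
    also have "\<dots> = (\<Sum>eta\<in>UNIV - {y}. mu N eta * R N eta y)" by (rule sum_remove_if)
    also have "\<dots> = mu N y * lam y" using inv unfolding invariant_prob_def lam_def by blast
    finally show ?thesis .
  qed
  have keyI: "(\<Sum>eta\<in>UNIV. mu N eta * T eta xi) = (\<Sum>y\<in>UNIV. mu N y * lam y * h y xi)" for xi
  proof -
    have "(\<Sum>eta\<in>UNIV. mu N eta * T eta xi) = (\<Sum>eta\<in>UNIV. \<Sum>y\<in>UNIV. mu N eta * (lam eta * pj eta y) * h y xi)"
      unfolding T_def by (simp add: sum_distrib_left mult_ac)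
    also have "\<dots> = (\<Sum>y\<in>UNIV. \<Sum>eta\<in>UNIV. mu N eta * (lam eta * pj eta y) * h y xi)" by (rule sum.swap)
    also have "\<dots> = (\<Sum>y\<in>UNIV. (\<Sum>eta\<in>UNIV. mu N eta * (lam eta * pj eta y)) * h y xi)"
      by (simp add: sum_distrib_right)
    also have "\<dots> = (\<Sum>y\<in>UNIV. mu N y * lam y * h y xi)" by (simp add: inv1)
    finally show ?thesis .
  qed
  have keyII: "T eta xi = lam eta * h eta xi" if "eta \<notin> F" for eta xi
    unfolding T_def using hout[OF that, of xi] by simp
  have keyIII: "(\<Sum>eta\<in>F. mu N eta * T eta xi) = mu N xi * lam xi" if xiF: "xi \<in> F" for xi
  proof -
    have s1: "(\<Sum>eta\<in>UNIV. mu N eta * T eta xi) = (\<Sum>eta\<in>UNIV - F. mu N eta * T eta xi) + (\<Sum>eta\<in>F. mu N eta * T eta xi)"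
      by (rule sum.subset_diff) auto
    have s2: "(\<Sum>y\<in>UNIV. mu N y * lam y * h y xi) = (\<Sum>y\<in>UNIV - F. mu N y * lam y * h y xi) + (\<Sum>y\<in>F. mu N y * lam y * h y xi)"
      by (rule sum.subset_diff) auto
    have s3: "(\<Sum>eta\<in>UNIV - F. mu N eta * T eta xi) = (\<Sum>y\<in>UNIV - F. mu N y * lam y * h y xi)"
      by (rule sum.cong) (auto simp: keyII)
    have s4: "(\<Sum>y\<in>F. mu N y * lam y * h y xi) = (\<Sum>y\<in>F. if y = xi then mu N y * lam y else 0)"
      by (rule sum.cong) (auto simp: hin)
    have s5: "(\<Sum>y\<in>F. if y = xi then mu N y * lam y else 0) = mu N xi * lam xi"
      using xiF by (simp add: sum.delta')
    show ?thesis using keyI[of xi] s1 s2 s3 s4 s5 by linarith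
  qed
  have keyIV: "(\<Sum>xi\<in>F. T eta xi) \<ge> lam eta" for eta
  proof -
    have "(\<Sum>xi\<in>F. T eta xi) = lam eta * (\<Sum>y\<in>UNIV. pj eta y * (\<Sum>xi\<in>F. h y xi))"
      unfolding T_def by (simp add: sum_distrib_left sum.swap[of _ F])
    also have "\<dots> \<ge> lam eta * (\<Sum>y\<in>UNIV. pj eta y * 1)"
    proof (rule mult_left_mono)
      show "(\<Sum>y\<in>UNIV. pj eta y * 1) \<le> (\<Sum>y\<in>UNIV. pj eta y * (\<Sum>xi\<in>F. h y xi))"
      proof (rule sum_mono)
        fix y
        show "pj eta y * 1 \<le> pj eta y * (\<Sum>xi\<in>F. h y xi)"
          by (rule mult_left_mono) (use pn hge in auto)
      qed
      show "0 \<le> lam eta" using lampos less_imp_le by blast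
    qed
    finally show ?thesis using ps by simp
  qed
  define A where "A = (\<Sum>eta\<in>F - X. mu N eta * (\<Sum>xi\<in>X. T eta xi))"
  define B where "B = (\<Sum>eta\<in>X. mu N eta * (\<Sum>xi\<in>F - X. T eta xi))"
  define C where "C = (\<Sum>eta\<in>X. mu N eta * (\<Sum>xi\<in>X. T eta xi))"
  have finF: "finite F" by simp
  have AC: "A + C = (\<Sum>xi\<in>X. mu N xi * lam xi)"
  proof -
    have "A + C = (\<Sum>eta\<in>F. mu N eta * (\<Sum>xi\<in>X. T eta xi))"
      unfolding A_def C_def by (rule sum.subset_diff[symmetric]) (use XF in auto)
    also have "\<dots> = (\<Sum>xi\<in>X. \<Sum>eta\<in>F. mu N eta * T eta xi)"
      by (simp add: sum_distrib_left sum.swap[of _ F])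
    also have "\<dots> = (\<Sum>xi\<in>X. mu N xi * lam xi)"
      by (rule sum.cong) (use keyIII XF in auto)
    finally show ?thesis .
  qed
  have CB: "(\<Sum>xi\<in>X. mu N xi * lam xi) \<le> C + B"
  proof -
    have "(\<Sum>xi\<in>X. mu N xi * lam xi) \<le> (\<Sum>eta\<in>X. mu N eta * ((\<Sum>xi\<in>X. T eta xi) + (\<Sum>xi\<in>F - X. T eta xi)))"
    proof (rule sum_mono)
      fix eta
      have "(\<Sum>xi\<in>X. T eta xi) + (\<Sum>xi\<in>F - X. T eta xi) = (\<Sum>xi\<in>F. T eta xi)"
        using sum.subset_diff[OF XF finF, of "T eta"] by simp
      then show "mu N eta * lam eta \<le> mu N eta * ((\<Sum>xi\<in>X. T eta xi) + (\<Sum>xi\<in>F - X. T eta xi))"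
        using keyIV[of eta] munn[of eta] by (simp add: mult_left_mono)
    qed
    also have "\<dots> = C + B" unfolding B_def C_def by (simp add: distrib_left sum.distrib)
    finally show ?thesis .
  qed
  have AB: "A \<le> B" using AC CB by linarith
  have tr: "trace_rate R N F eta xi = T eta xi" if "eta \<noteq> xi" for eta xi
    unfolding trace_rate_def T_def lam_def pj_def h_def using that by (simp add: hit_hfun)
  have eA: "(\<Sum>eta\<in>F - X. mu N eta * (\<Sum>xi\<in>X. trace_rate R N F eta xi)) = A"
    unfolding A_def by (intro sum.cong refl arg_cong2[where f="(*)"]) (rule tr, blast)
  have eB: "(\<Sum>eta\<in>X. mu N eta * (\<Sum>xi\<in>F - X. trace_rate R N F eta xi)) = B"
    unfolding B_def by (intro sum.cong refl arg_cong2[where f="(*)"]) (rule tr, blast)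
  show ?thesis using AB eA eB by simp
qed



lemma trace_nonneg:
  fixes R :: "nat \<Rightarrow> 'a::finite \<Rightarrow> 'a \<Rightarrow> real"
  assumes irr: "irreducible_rates R" and hp: "\<forall>y. holding_rate R N y > 0"
  shows "trace_rate R N F eta xi \<ge> 0"
proof -
  have pn: "\<forall>y w. jump_prob R N y w \<ge> 0" using jp_nonneg[OF irr] by blast
  have ps: "\<forall>y. (\<Sum>w\<in>UNIV. jump_prob R N y w) = 1" using jp_sum hp by blast
  have "0 \<le> holding_rate R N eta * (\<Sum>y\<in>UNIV. jump_prob R N eta y * hit_at R N F y xi)"
    by (intro mult_nonneg_nonneg sum_nonneg)
       (use hp pn hfun_nonneg[OF pn ps] in \<open>auto simp: hit_hfun intro: less_imp_le\<close>)
  then show ?thesis unfolding trace_rate_def by simp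
qed

lemma block_ineq:
  fixes R :: "nat \<Rightarrow> 'a::finite \<Rightarrow> 'a \<Rightarrow> real" and mu :: "nat \<Rightarrow> 'a \<Rightarrow> real"
  assumes irr: "irreducible_rates R" and inv: "invariant_prob R mu"
    and part: "is_partition p F D" and hp: "\<forall>y. holding_rate R N y > 0"
    and x: "x \<in> {1..p}" and y: "y \<in> {1..p}" and xy: "x \<noteq> y"
  shows "(\<Sum>eta\<in>F y. mu N eta * (\<Sum>xi\<in>F x. trace_rate R N (Fset p F) eta xi))
     \<le> (\<Sum>z\<in>{1..p} - {x}. \<Sum>eta\<in>F x. mu N eta * (\<Sum>xi\<in>F z. trace_rate R N (Fset p F) eta xi))"
proof -
  define Fs where "Fs = Fset p F"
  define tr where "tr = trace_rate R N Fs"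
  have disj: "\<forall>a\<in>{1..p}. \<forall>b\<in>{1..p}. a \<noteq> b \<longrightarrow> F a \<inter> F b = {}"
    using part unfolding is_partition_def by blast
  have ne: "F x \<noteq> {}" using part x unfolding is_partition_def by blast
  have xFs: "F x \<subseteq> Fs" using x unfolding Fs_def Fset_def by blast
  have yFs: "F y \<subseteq> Fs - F x" using y disj x xy unfolding Fs_def Fset_def by blast
  have Fsne: "Fs \<noteq> {}" using xFs ne by blast
  have munn: "mu N a \<ge> 0" for a using inv unfolding invariant_prob_def by blast
  have trnn: "tr a b \<ge> 0" for a b unfolding tr_def by (rule trace_nonneg[OF irr hp])
  have tb: "(\<Sum>eta\<in>Fs - F x. mu N eta * (\<Sum>xi\<in>F x. tr eta xi))
         \<le> (\<Sum>eta\<in>F x. mu N eta * (\<Sum>xi\<in>Fs - F x. tr eta xi))"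
    unfolding tr_def by (rule trace_balance[OF irr inv hp Fsne xFs])
  have l: "(\<Sum>eta\<in>F y. mu N eta * (\<Sum>xi\<in>F x. tr eta xi)) \<le> (\<Sum>eta\<in>Fs - F x. mu N eta * (\<Sum>xi\<in>F x. tr eta xi))"
    by (rule sum_mono2[OF _ yFs]) (auto intro!: mult_nonneg_nonneg sum_nonneg munn trnn)
  have U: "Fs - F x = (\<Union>z\<in>{1..p} - {x}. F z)"
  proof
    show "Fs - F x \<subseteq> (\<Union>z\<in>{1..p} - {x}. F z)" unfolding Fs_def Fset_def by blast
    show "(\<Union>z\<in>{1..p} - {x}. F z) \<subseteq> Fs - F x"
      unfolding Fs_def Fset_def using disj x by blast
  qed
  have inner: "(\<Sum>xi\<in>Fs - F x. tr eta xi) = (\<Sum>z\<in>{1..p} - {x}. \<Sum>xi\<in>F z. tr eta xi)" for eta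
    unfolding U by (rule sum.UNION_disjoint) (use disj in auto)
  have r: "(\<Sum>eta\<in>F x. mu N eta * (\<Sum>xi\<in>Fs - F x. tr eta xi))
      = (\<Sum>z\<in>{1..p} - {x}. \<Sum>eta\<in>F x. mu N eta * (\<Sum>xi\<in>F z. tr eta xi))"
    unfolding inner by (simp add: sum_distrib_left sum.swap[of _ "F x"])
  show ?thesis using l tb r unfolding tr_def Fs_def by linarith
qed



theorem mainTheorem18:
  fixes R :: "nat \<Rightarrow> 'a::finite \<Rightarrow> 'a \<Rightarrow> real"
    and mu :: "nat \<Rightarrow> 'a \<Rightarrow> real"
    and p :: nat and F :: "nat \<Rightarrow> 'a set" and D :: "'a set"
    and beta_minus beta :: "nat \<Rightarrow> real"
    and C :: "nat set"
  assumes irr: "irreducible_rates R"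
    and inv: "invariant_prob R mu"
    and A: "assumption_A R"
    and p2: "p \<ge> 2"
    and part: "is_partition p F D"
    and pos_minus: "\<forall>N. beta_minus N > 0"
    and pos: "\<forall>N. beta N > 0"
    and ratio: "(\<lambda>N. beta_minus N / beta N) \<longlonglongrightarrow> 0"
    and h0: "H0 mu p F"
    and h1: "H1 R mu p F beta"
    and h2: "H2 R mu p F beta_minus"
    and h3: "H3 R D beta"
    and cls: "comm_class p (rF R mu p F beta) C"
  shows "\<forall>eta\<in>(\<Union>x\<in>C. F x). \<forall>xi\<in>(\<Union>x\<in>C. F x). eta \<noteq> xi \<longrightarrow>
           (\<exists>m. 0 < m \<and> (\<lambda>N. mu N eta / mu N xi) \<longlonglongrightarrow> m)"
proof -
  define Fs where "Fs = Fset p F"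
  have disj: "\<forall>a\<in>{1..p}. \<forall>b\<in>{1..p}. a \<noteq> b \<longrightarrow> F a \<inter> F b = {}"
    using part unfolding is_partition_def by blast
  have ne: "\<forall>a\<in>{1..p}. F a \<noteq> {}" using part unfolding is_partition_def by blast
  have munn: "mu N a \<ge> 0" for N a using inv unfolding invariant_prob_def by blast
  have one: "(1::nat) \<in> {1..p}" and two: "(2::nat) \<in> {1..p}" using p2 by auto
  obtain a1 where a1: "a1 \<in> F 1" using ne one by blast
  obtain a2 where a2: "a2 \<in> F 2" using ne two by blast
  have n12: "(1::nat) \<noteq> 2" by simp
  have "F 1 \<inter> F 2 = {}" using disj one two n12 by blast
  then have a12: "a1 \<noteq> a2" using a1 a2 by blast
  have hp: "\<forall>y. holding_rate R N y > 0" for N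
  proof
    fix y
    show "holding_rate R N y > 0"
    proof (cases "y = a1")
      case True then show ?thesis using hr_pos[OF irr, of a2 y] a12 by simp
    next
      case False then show ?thesis using hr_pos[OF irr, of a1 y] by simp
    qed
  qed
  define P where "P = (\<lambda>a b N. R N a b)"
  have A1: "\<forall>a b. a \<noteq> b \<longrightarrow> (\<forall>N. R N a b = 0) \<or> (\<forall>N. R N a b > 0)"
    using A unfolding assumption_A_def by blast
  have SzR: "\<forall>a\<in>UNIV. \<forall>b\<in>UNIV. a \<noteq> b \<longrightarrow> Sz R 1 (P a b)"
  proof (intro ballI impI)
    fix a b :: 'a assume ab: "a \<noteq> b"
    show "Sz R 1 (P a b)"
    proof (cases "\<forall>N. R N a b > 0")
      case True
      then have "(a, b) \<in> pos_pairs R" using ab unfolding pos_pairs_def by simp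
      then show ?thesis unfolding P_def using Spos_rate Spos_Sz by blast
    next
      case False
      then have "\<forall>N. R N a b = 0" using A1 ab by blast
      then show ?thesis unfolding P_def by (intro Sz_zeroI) simp
    qed
  qed
  have connR: "\<forall>a\<in>UNIV. \<forall>b\<in>UNIV. (a, b) \<in> (EdS R 1 UNIV P)\<^sup>*"
  proof (intro ballI)
    fix a b :: 'a
    have "(a, b) \<in> {(a, b). a \<noteq> b \<and> R 0 a b > 0}\<^sup>*" using irr unfolding irreducible_rates_def by blast
    moreover have "{(a, b). a \<noteq> b \<and> R 0 a b > 0} \<subseteq> EdS R 1 UNIV P"
    proof
      fix e assume "e \<in> {(a, b). a \<noteq> b \<and> R 0 a b > 0}"
      then obtain u v where e: "e = (u, v)" "u \<noteq> v" "R 0 u v > 0" by blast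
      then have "\<forall>N. R N u v > 0" using A1 by force
      then have "(u, v) \<in> pos_pairs R" using e unfolding pos_pairs_def by simp
      then have "Spos R 1 (P u v)" unfolding P_def using Spos_rate by blast
      then show "e \<in> EdS R 1 UNIV P" unfolding EdS_def using e by simp
    qed
    ultimately show "(a, b) \<in> (EdS R 1 UNIV P)\<^sup>*" using rtrancl_mono by blast
  qed
  obtain m f where fS: "\<forall>a\<in>UNIV. Spos R m (f a)"
    and fmu: "\<forall>N mu'. (\<forall>b\<in>UNIV. (\<Sum>a\<in>UNIV - {b}. mu' a * P a b N) = mu' b * (\<Sum>c\<in>UNIV - {b}. P b c N))
         \<longrightarrow> (\<exists>c. \<forall>a\<in>UNIV. mu' a = c * f a N)"
    using elim_main[OF refl UNIV_not_empty SzR connR] by blast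
  have fpos: "f a N > 0" for a N using Spos_pos fS by blast
  have cN: "\<exists>c. c > 0 \<and> (\<forall>a. mu N a = c * f a N)" for N
  proof -
    have "\<forall>b\<in>UNIV. (\<Sum>a\<in>UNIV - {b}. mu N a * P a b N) = mu N b * (\<Sum>c\<in>UNIV - {b}. P b c N)"
      using inv unfolding invariant_prob_def holding_rate_def P_def by blast
    then obtain c where c: "\<forall>a. mu N a = c * f a N" using fmu by blast
    have "c > 0"
    proof (rule ccontr)
      assume "\<not> c > 0"
      then have le0: "mu N a \<le> 0" for a using c fpos[of a N] by (simp add: mult_nonpos_nonneg less_imp_le)
      have "mu N a = 0" for a using le0[of a] munn[of N a] by linarith
      then have "(\<Sum>a\<in>UNIV. mu N a) = 0" by simp
      then show False using inv unfolding invariant_prob_def by simp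
    qed
    then show ?thesis using c by blast
  qed
  have mupos: "mu N a > 0" for N a
  proof -
    obtain c where "c > 0" "\<forall>a. mu N a = c * f a N" using cN by blast
    then show ?thesis using fpos[of a N] by simp
  qed
  have qf: "mu N a / mu N b = f a N / f b N" for N a b
  proof -
    obtain c where "c > 0" "\<forall>a. mu N a = c * f a N" using cN by blast
    then show ?thesis by simp
  qed
  have muSpos: "muS mu N (F x) > 0" if "x \<in> {1..p}" for N x
    unfolding muS_def using ne that mupos by (intro sum_pos) auto
  have muSnn: "muS mu N A \<ge> 0" for N A unfolding muS_def using munn by (intro sum_nonneg) auto
  have edge: "\<exists>K. eventually (\<lambda>N. muS mu N (F y) \<le> K * muS mu N (F x)) sequentially"
    if y: "y \<in> {1..p}" and x: "x \<in> {1..p}" and yx: "y \<noteq> x" and r0: "rF R mu p F beta y x > 0" for x y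
  proof -
    define g where "g = (\<lambda>z N. beta N * mean_rate R mu N Fs (F x) (F z))"
    have gconv: "g z \<longlonglongrightarrow> lim (g z)" if "z \<in> {1..p} - {x}" for z
    proof -
      have "\<exists>r. 0 \<le> r \<and> g z \<longlonglongrightarrow> r" using h1 that x unfolding H1_def g_def Fs_def by auto
      then have "convergent (g z)" unfolding convergent_def by blast
      then show ?thesis by (simp add: convergent_LIMSEQ_iff)
    qed
    define S where "S = (\<Sum>z\<in>{1..p} - {x}. lim (g z))"
    have Sl: "(\<lambda>N. \<Sum>z\<in>{1..p} - {x}. g z N) \<longlonglongrightarrow> S"
      unfolding S_def by (rule tendsto_sum) (use gconv in auto)
    define r where "r = rF R mu p F beta y x"
    have rl: "(\<lambda>N. beta N * mean_rate R mu N Fs (F y) (F x)) \<longlonglongrightarrow> r"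
    proof -
      obtain r' where r': "(\<lambda>N. beta N * mean_rate R mu N (Fset p F) (F y) (F x)) \<longlonglongrightarrow> r'"
        using h1 x y yx unfolding H1_def by blast
      have "r = r'" unfolding r_def rF_def using r' by (rule limI)
      then show ?thesis using r' unfolding Fs_def by simp
    qed
    have r0': "r > 0" using r0 unfolding r_def .
    have ev1: "eventually (\<lambda>N. r / 2 < beta N * mean_rate R mu N Fs (F y) (F x)) sequentially"
      by (rule order_tendstoD(1)[OF rl]) (use r0' in simp)
    have ev2: "eventually (\<lambda>N. (\<Sum>z\<in>{1..p} - {x}. g z N) < S + 1) sequentially"
      by (rule order_tendstoD(2)[OF Sl]) simp
    have "eventually (\<lambda>N. muS mu N (F y) \<le> (2 * (S + 1) / r) * muS mu N (F x)) sequentially"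
      using ev1 ev2
    proof eventually_elim
      case (elim N)
      define G where "G = (\<lambda>a b. \<Sum>eta\<in>F a. mu N eta * (\<Sum>xi\<in>F b. trace_rate R N Fs eta xi))"
      have Gm: "G a b = muS mu N (F a) * mean_rate R mu N Fs (F a) (F b)" if "a \<in> {1..p}" for a b
        unfolding G_def mean_rate_def using muSpos[OF that, of N] by (simp add: muS_def)
      have bi: "G y x \<le> (\<Sum>z\<in>{1..p} - {x}. G x z)"
        unfolding G_def Fs_def by (rule block_ineq[OF irr inv part hp x y]) (use yx in simp)
      have bN: "beta N > 0" using pos by blast
      have "muS mu N (F y) * (r / 2) \<le> muS mu N (F y) * (beta N * mean_rate R mu N Fs (F y) (F x))"
        by (rule mult_left_mono) (use elim(1) muSnn[of N "F y"] in auto)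
      also have "\<dots> = beta N * G y x" using Gm[OF y] by simp
      also have "\<dots> \<le> beta N * (\<Sum>z\<in>{1..p} - {x}. G x z)" using bi bN by simp
      also have "\<dots> = muS mu N (F x) * (\<Sum>z\<in>{1..p} - {x}. g z N)"
        unfolding g_def using Gm[OF x] by (simp add: sum_distrib_left mult_ac)
      also have "\<dots> \<le> muS mu N (F x) * (S + 1)"
        by (rule mult_left_mono) (use elim(2) muSpos[OF x, of N] in auto)
      finally have fin: "muS mu N (F y) * (r / 2) \<le> muS mu N (F x) * (S + 1)" .
      show ?case using fin r0' by (simp add: field_simps)
    qed
    then show ?thesis by blast
  qed
  define reach where "reach = {(x, y). x \<in> {1..p} \<and> y \<in> {1..p} \<and> x \<noteq> y \<and> rF R mu p F beta x y > 0}"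
  have path: "\<exists>K. eventually (\<lambda>N. muS mu N (F y) \<le> K * muS mu N (F x)) sequentially"
    if "(y, x) \<in> reach\<^sup>*" for x y
    using that
  proof (induction rule: rtrancl_induct)
    case base
    then show ?case by (intro exI[of _ 1]) simp
  next
    case (step w x)
    obtain K where K: "eventually (\<lambda>N. muS mu N (F y) \<le> K * muS mu N (F w)) sequentially"
      using step.IH by blast
    have "w \<in> {1..p}" "x \<in> {1..p}" "w \<noteq> x" "rF R mu p F beta w x > 0"
      using step.hyps(2) unfolding reach_def by auto
    then obtain K' where K': "eventually (\<lambda>N. muS mu N (F w) \<le> K' * muS mu N (F x)) sequentially"
      using edge by blast
    have "eventually (\<lambda>N. muS mu N (F y) \<le> (max K 0 * K') * muS mu N (F x)) sequentially"
      using K K'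
    proof eventually_elim
      case (elim N)
      have "muS mu N (F y) \<le> K * muS mu N (F w)" using elim(1) .
      also have "\<dots> \<le> max K 0 * muS mu N (F w)" using muSnn[of N "F w"] by (simp add: mult_right_mono)
      also have "\<dots> \<le> max K 0 * (K' * muS mu N (F x))" using elim(2) by (simp add: mult_left_mono)
      finally show ?case by (simp add: mult_ac)
    qed
    then show ?case by blast
  qed
  obtain x0 where x0: "x0 \<in> {1..p}" and Ceq: "C = {y \<in> {1..p}. (x0, y) \<in> reach\<^sup>* \<and> (y, x0) \<in> reach\<^sup>*}"
    using cls unfolding comm_class_def reach_def Let_def by blast
  have Creach: "(x, y) \<in> reach\<^sup>*" if "x \<in> C" "y \<in> C" for x y
    using that unfolding Ceq by (blast intro: rtrancl_trans)
  have Csub: "C \<subseteq> {1..p}" unfolding Ceq by blast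
  have ub: "\<exists>U. eventually (\<lambda>N. mu N eta / mu N xi \<le> U) sequentially"
    if x: "x \<in> C" and y: "y \<in> C" and eta: "eta \<in> F x" and xi: "xi \<in> F y" for x y eta xi
  proof -
    have xp: "x \<in> {1..p}" and yp: "y \<in> {1..p}" using x y Csub by auto
    obtain K where K: "eventually (\<lambda>N. muS mu N (F x) \<le> K * muS mu N (F y)) sequentially"
      using path Creach[OF x y] by blast
    obtain c where c: "0 < c" "(\<lambda>N. mu N xi / muS mu N (F y)) \<longlonglongrightarrow> c"
      using h0 yp xi unfolding H0_def by blast
    have ev: "eventually (\<lambda>N. c / 2 < mu N xi / muS mu N (F y)) sequentially"
      by (rule order_tendstoD(1)[OF c(2)]) (use c(1) in simp)
    have "eventually (\<lambda>N. mu N eta / mu N xi \<le> max K 0 * (2 / c)) sequentially"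
      using K ev
    proof eventually_elim
      case (elim N)
      have sy: "muS mu N (F y) > 0" using muSpos[OF yp] .
      have mx: "mu N xi > 0" using mupos .
      have "mu N eta \<le> muS mu N (F x)"
        unfolding muS_def by (rule member_le_sum) (use eta munn in auto)
      also have "\<dots> \<le> K * muS mu N (F y)" using elim(1) .
      also have "\<dots> \<le> max K 0 * muS mu N (F y)" using sy by (simp add: mult_right_mono)
      also have "\<dots> \<le> max K 0 * ((2 / c) * mu N xi)"
      proof (rule mult_left_mono)
        have "c / 2 * muS mu N (F y) < mu N xi" using elim(2) sy by (simp add: field_simps)
        then show "muS mu N (F y) \<le> 2 / c * mu N xi" using c(1) by (simp add: field_simps)
      qed simp
      finally have "mu N eta \<le> (max K 0 * (2 / c)) * mu N xi" by (simp add: mult_ac)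
      then show ?case using mx by (simp add: divide_le_eq)
    qed
    then show ?thesis by blast
  qed
  show ?thesis
  proof (intro ballI impI)
    fix eta xi assume etaC: "eta \<in> (\<Union>x\<in>C. F x)" and xiC: "xi \<in> (\<Union>x\<in>C. F x)" and "eta \<noteq> xi"
    obtain x where x: "x \<in> C" "eta \<in> F x" using etaC by blast
    obtain y where y: "y \<in> C" "xi \<in> F y" using xiC by blast
    define q where "q = (\<lambda>N. mu N eta / mu N xi)"
    obtain U where U: "eventually (\<lambda>N. q N \<le> U) sequentially"
      using ub[OF x(1) y(1) x(2) y(2)] unfolding q_def by blast
    obtain U' where U': "eventually (\<lambda>N. mu N xi / mu N eta \<le> U') sequentially"
      using ub[OF y(1) x(1) y(2) x(2)] by blast
    obtain N0 where "\<forall>N\<ge>N0. mu N xi / mu N eta \<le> U'" using U' unfolding eventually_sequentially by blast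
    then have N0: "mu N0 xi / mu N0 eta \<le> U'" by blast
    have "0 < mu N0 xi / mu N0 eta" by (intro divide_pos_pos mupos)
    then have U'pos: "U' > 0" using N0 by linarith
    have low: "eventually (\<lambda>N. 1 / U' \<le> q N) sequentially"
      using U'
    proof eventually_elim
      case (elim N)
      have pe: "mu N eta > 0" and px: "mu N xi > 0" using mupos by blast+
      have "mu N xi \<le> U' * mu N eta" using elim pe by (simp add: divide_le_eq)
      then show ?case unfolding q_def using pe px U'pos by (simp add: field_simps)
    qed
    have qeq: "q = (\<lambda>N. f eta N / f xi N)" unfolding q_def by (rule ext) (rule qf)
    have "(\<exists>L\<ge>0. (\<lambda>N. f eta N / f xi N) \<longlonglongrightarrow> L) \<or> filterlim (\<lambda>N. f eta N / f xi N) at_top sequentially"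
      by (rule Spos_ratio[OF A fS[rule_format, OF UNIV_I] fS[rule_format, OF UNIV_I]])
    then have "(\<exists>L\<ge>0. q \<longlonglongrightarrow> L) \<or> filterlim q at_top sequentially" unfolding qeq .
    then obtain L where L: "q \<longlonglongrightarrow> L"
    proof
      assume "filterlim q at_top sequentially"
      then have "eventually (\<lambda>N. U + 1 \<le> q N) sequentially" unfolding filterlim_at_top by blast
      then have "eventually (\<lambda>N. False) sequentially" using U by eventually_elim simp
      then show ?thesis by (simp add: eventually_False)
    qed blast
    have "1 / U' \<le> L" by (rule tendsto_lowerbound[OF L low]) simp
    moreover have "0 < 1 / U'" using U'pos by simp
    ultimately have "L > 0" by linarith
    then show "\<exists>m. 0 < m \<and> (\<lambda>N. mu N eta / mu N xi) \<longlonglongrightarrow> m" using L unfolding q_def by blast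
  qed
qed

end
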